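(* Let $T>0$ and let $(c,\rho,\theta,u)$ be a smooth solution of (NS) on $[0,T]\times\mathbb T$ with $c\in[0,1]$ and assume there are positive constants with $\underline\rho\le\rho\le\overline\rho$ and $\underline\theta\le\theta\le\overline\theta$ on $[0,T]\times\mathbb T$. Then there exist constants $C_8,C_9>0$, depending only on $T$, these bounds, $\mu_\pm,\gamma_\pm,c_{v,\pm}$, $\int_0^1\sigma_0^2$ and $\int_0^1\rho_0E_0$, such that $\int_0^1(\partial_xu)^2(t)\le C_8$ for all $t\in[0,T]$ and $\int_0^T\|\partial_xu\|_{L^\infty(\mathbb T)}^2\le C_9$; i.e. $\partial_xu\in L^\infty(0,T;L^2(\mathbb T))\cap L^2(0,T;L^\infty(\mathbb T))$ using only $\sigma_0\in L^2(\mathbb T)$.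
   Context: $\mathbb T=\mathbb R/\mathbb Z$ is identified with $[0,1)$. Fix constants $\mu_\pm>0$, $\gamma_\pm>1$, $c_{v,\pm}>0$, and for $c\in[0,1]$ set $\mu(c)=c\mu_++(1-c)\mu_-$, $\gamma(c)=c\gamma_++(1-c)\gamma_-$, $c_v(c)=c\,c_{v,+}+(1-c)c_{v,-}$. For unknowns $c,\rho,\theta,u$ on $[0,T]\times\mathbb T$, write $p=(\gamma(c)-1)\rho\theta$, $\sigma=\mu(c)\partial_xu-p$, $E=u^2/2+c_v(c)\theta$. The mesoscopic system (NS) is $\partial_t\rho+\partial_x(\rho u)=0$, $\partial_t(\rho c)+\partial_x(\rho c u)=0$, $\partial_t(\rho u)+\partial_x(\rho u^2)=\partial_x\sigma$, $\partial_t(\rho E)+\partial_x(\rho E u)=\partial_x(\sigma u)$, with initial data $\rho_0,c_0,u_0,\theta_0$, $E_0=u_0^2/2+c_v(c_0)\theta_0$, and $\sigma_0=\sigma|_{t=0}$. *)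

theory Defs
  imports "HOL-Analysis.Analysis"
begin

text \<open>Fields are functions f t x of time t and space x (x in R, 1-periodic,
  representing the torus R/Z identified with [0,1)).\<close>

definition pdt :: "(real \<Rightarrow> real \<Rightarrow> real) \<Rightarrow> real \<Rightarrow> real \<Rightarrow> real" where
  "pdt f t x = deriv (\<lambda>s. f s x) t"

definition pdx :: "(real \<Rightarrow> real \<Rightarrow> real) \<Rightarrow> real \<Rightarrow> real \<Rightarrow> real" where
  "pdx f t x = deriv (\<lambda>y. f t y) x"

fun pdi :: "bool list \<Rightarrow> (real \<Rightarrow> real \<Rightarrow> real) \<Rightarrow> real \<Rightarrow> real \<Rightarrow> real" where
  "pdi [] f = f"
| "pdi (b # bs) f = (if b then pdt (pdi bs f) else pdx (pdi bs f))"

definition smooth_on2 :: "(real \<times> real) set \<Rightarrow> (real \<Rightarrow> real \<Rightarrow> real) \<Rightarrow> bool" where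
  "smooth_on2 U f \<longleftrightarrow>
     (\<forall>bs. continuous_on U (\<lambda>p. pdi bs f (fst p) (snd p)) \<and>
       (\<forall>p\<in>U. (\<lambda>s. pdi bs f s (snd p)) differentiable (at (fst p)) \<and>
               (\<lambda>y. pdi bs f (fst p) y) differentiable (at (snd p))))"

definition mix :: "real \<Rightarrow> real \<Rightarrow> real \<Rightarrow> real" where
  "mix ap am c = c * ap + (1 - c) * am"

definition pressure :: "real \<Rightarrow> real \<Rightarrow> (real \<Rightarrow> real \<Rightarrow> real) \<Rightarrow> (real \<Rightarrow> real \<Rightarrow> real)
   \<Rightarrow> (real \<Rightarrow> real \<Rightarrow> real) \<Rightarrow> real \<Rightarrow> real \<Rightarrow> real" where
  "pressure gp gm c \<rho> \<theta> t x = (mix gp gm (c t x) - 1) * \<rho> t x * \<theta> t x"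

definition stress :: "real \<Rightarrow> real \<Rightarrow> real \<Rightarrow> real \<Rightarrow> (real \<Rightarrow> real \<Rightarrow> real) \<Rightarrow> (real \<Rightarrow> real \<Rightarrow> real)
   \<Rightarrow> (real \<Rightarrow> real \<Rightarrow> real) \<Rightarrow> (real \<Rightarrow> real \<Rightarrow> real) \<Rightarrow> real \<Rightarrow> real \<Rightarrow> real" where
  "stress mp mm gp gm c \<rho> \<theta> u t x =
     mix mp mm (c t x) * pdx u t x - pressure gp gm c \<rho> \<theta> t x"

definition energy :: "real \<Rightarrow> real \<Rightarrow> (real \<Rightarrow> real \<Rightarrow> real) \<Rightarrow> (real \<Rightarrow> real \<Rightarrow> real)
   \<Rightarrow> (real \<Rightarrow> real \<Rightarrow> real) \<Rightarrow> real \<Rightarrow> real \<Rightarrow> real" where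
  "energy cp cm c \<theta> u t x = (u t x)\<^sup>2 / 2 + mix cp cm (c t x) * \<theta> t x"

definition NS_solution where
  "NS_solution mp mm gp gm cp cm T c \<rho> \<theta> u \<longleftrightarrow>
    (\<exists>U. open U \<and> {0..T} \<times> UNIV \<subseteq> U \<and>
       smooth_on2 U c \<and> smooth_on2 U \<rho> \<and> smooth_on2 U \<theta> \<and> smooth_on2 U u) \<and>
    (\<forall>t x. c t (x + 1) = c t x \<and> \<rho> t (x + 1) = \<rho> t x \<and>
           \<theta> t (x + 1) = \<theta> t x \<and> u t (x + 1) = u t x) \<and>
    (let \<sigma> = stress mp mm gp gm c \<rho> \<theta> u; E = energy cp cm c \<theta> u in
     \<forall>t\<in>{0..T}. \<forall>x.
       pdt \<rho> t x + pdx (\<lambda>t x. \<rho> t x * u t x) t x = 0 \<and>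
       pdt (\<lambda>t x. \<rho> t x * c t x) t x + pdx (\<lambda>t x. \<rho> t x * c t x * u t x) t x = 0 \<and>
       pdt (\<lambda>t x. \<rho> t x * u t x) t x + pdx (\<lambda>t x. \<rho> t x * (u t x)\<^sup>2) t x = pdx \<sigma> t x \<and>
       pdt (\<lambda>t x. \<rho> t x * E t x) t x + pdx (\<lambda>t x. \<rho> t x * E t x * u t x) t x
         = pdx (\<lambda>t x. \<sigma> t x * u t x) t x)"

end

theory Submission
  imports Defs "HOL-Analysis.Analysis"
begin


lemma smooth_cont:
  "smooth_on2 U f \<Longrightarrow> continuous_on U (\<lambda>p. pdi bs f (fst p) (snd p))"
  unfolding smooth_on2_def by blast

lemma smooth_dt:
  assumes "smooth_on2 U f" "(t, x) \<in> U"
  shows "((\<lambda>s. pdi bs f s x) has_real_derivative pdi (True # bs) f t x) (at t)"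
proof -
  have "(\<lambda>s. pdi bs f s x) differentiable (at t)"
    using assms unfolding smooth_on2_def by (metis fst_conv snd_conv)
  then show ?thesis
    by (simp add: pdt_def DERIV_deriv_iff_real_differentiable)
qed

lemma smooth_dx:
  assumes "smooth_on2 U f" "(t, x) \<in> U"
  shows "((\<lambda>y. pdi bs f t y) has_real_derivative pdi (False # bs) f t x) (at x)"
proof -
  have "(\<lambda>y. pdi bs f t y) differentiable (at x)"
    using assms unfolding smooth_on2_def by (metis fst_conv snd_conv)
  then show ?thesis
    by (simp add: pdx_def DERIV_deriv_iff_real_differentiable)
qed

lemma deriv_periodic:
  fixes g :: "real \<Rightarrow> real"
  assumes "\<And>y. g (y + 1) = g y"
  shows "deriv g (x + 1) = deriv g x"
proof -
  have "(g has_field_derivative D) (at (x + 1)) \<longleftrightarrow> (g has_field_derivative D) (at x)" for D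
    using DERIV_shift[of g D x 1] assms by simp
  then show ?thesis unfolding deriv_def by simp
qed

lemma pdi_periodic:
  assumes "\<And>t x. f t (x + 1) = f t x"
  shows "pdi bs f t (x + 1) = pdi bs f t x"
  using assms
proof (induction bs arbitrary: t x)
  case Nil then show ?case by simp
next
  case (Cons b bs)
  show ?case
  proof (cases b)
    case True
    have "(\<lambda>s. pdi bs f s (x + 1)) = (\<lambda>s. pdi bs f s x)" using Cons by auto
    then show ?thesis using True by (simp add: pdt_def)
  next
    case False
    then show ?thesis using Cons deriv_periodic[of "\<lambda>y. pdi bs f t y" x]
      by (simp add: pdx_def)
  qed
qed


lemma cont_slice_x:
  assumes "smooth_on2 U f" "{t} \<times> S \<subseteq> U"
  shows "continuous_on S (\<lambda>z. pdi bs f t z)"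
proof -
  have "continuous_on S (\<lambda>z. pdi bs f (fst (t, z)) (snd (t, z)))"
    by (rule continuous_on_compose2[OF smooth_cont[OF assms(1)]])
       (use assms(2) in \<open>auto intro!: continuous_intros\<close>)
  then show ?thesis by simp
qed

lemma clairaut:
  assumes sm: "smooth_on2 U f" and sub: "{0..T} \<times> UNIV \<subseteq> U" and T: "T > 0"
    and t: "t \<in> {0..T}"
  shows "pdi [True, False] f t x = pdi [False, True] f t x"
proof -
  define a where "a = x - 1"
  define b where "b = x + 1"
  have inU: "(s, z) \<in> U" if "s \<in> {0..T}" for s z using sub that by auto
  have key: "integral {a..y} (\<lambda>z. pdi [True, False] f t z) = integral {a..y} (\<lambda>z. pdi [False, True] f t z)"
    if y: "a \<le> y" for y
  proof -
    have i2: "((\<lambda>z. pdi [False, True] f t z) has_integral (pdi [True] f t y - pdi [True] f t a)) {a..y}"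
    proof (rule fundamental_theorem_of_calculus[OF y])
      fix z assume "z \<in> {a..y}"
      show "((\<lambda>z. pdi [True] f t z) has_vector_derivative pdi [False, True] f t z) (at z within {a..y})"
        using smooth_dx[OF sm inU[OF t], of "[True]"]
        by (simp add: has_real_derivative_iff_has_vector_derivative[symmetric] has_field_derivative_at_within)
    qed
    define H where "H s = integral (cbox a y) (\<lambda>z. pdi [False] f s z)" for s
    have H1: "(H has_field_derivative integral (cbox a y) (\<lambda>z. pdi [True, False] f t z)) (at t within {0..T})"
      unfolding H_def
    proof (rule leibniz_rule_field_derivative)
      fix s z assume s: "s \<in> {0..T}" and "z \<in> cbox a y"
      show "((\<lambda>s. pdi [False] f s z) has_field_derivative pdi [True, False] f s z) (at s within {0..T})"
        using smooth_dt[OF sm inU[OF s], of "[False]"] by (simp add: has_field_derivative_at_within)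
    next
      fix s assume s: "s \<in> {0..T}"
      show "(\<lambda>z. pdi [False] f s z) integrable_on cbox a y"
        by (rule integrable_continuous) (rule cont_slice_x[OF sm], use inU s in auto)
    next
      have "continuous_on ({0..T} \<times> cbox a y) (\<lambda>p. pdi [True, False] f (fst p) (snd p))"
        by (rule continuous_on_subset[OF smooth_cont[OF sm]]) (use inU in auto)
      then show "continuous_on ({0..T} \<times> cbox a y) (\<lambda>(s, z). pdi [True, False] f s z)"
        by (simp add: split_beta)
    qed (use t in auto)
    have Hs: "H s = f s y - f s a" if s: "s \<in> {0..T}" for s
    proof -
      have "((\<lambda>z. pdi [False] f s z) has_integral (pdi [] f s y - pdi [] f s a)) {a..y}"
      proof (rule fundamental_theorem_of_calculus[OF y])
        fix z assume "z \<in> {a..y}"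
        show "((\<lambda>z. pdi [] f s z) has_vector_derivative pdi [False] f s z) (at z within {a..y})"
          using smooth_dx[OF sm inU[OF s], of "[]"]
          by (simp add: has_real_derivative_iff_has_vector_derivative[symmetric] has_field_derivative_at_within)
      qed
      then show ?thesis unfolding H_def by (simp add: integral_unique)
    qed
    have H2: "((\<lambda>s. f s y - f s a) has_field_derivative (pdi [True] f t y - pdi [True] f t a)) (at t within {0..T})"
      using has_field_derivative_at_within[OF DERIV_diff[OF smooth_dt[OF sm inU[OF t], of "[]" y] smooth_dt[OF sm inU[OF t], of "[]" a]]]
      by simp
    have H3: "(H has_field_derivative (pdi [True] f t y - pdi [True] f t a)) (at t within {0..T})"
      by (rule has_field_derivative_transform_within[OF H2, of 1]) (use t Hs in auto)
    have "integral (cbox a y) (\<lambda>z. pdi [True, False] f t z) = pdi [True] f t y - pdi [True] f t a"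
      using vector_derivative_unique_within_closed_interval[of 0 T t H]
        H1 H3 T t by (auto simp: has_real_derivative_iff_has_vector_derivative)
    then show ?thesis using i2 by (simp add: integral_unique)
  qed
  define g where "g z = pdi [True, False] f t z - pdi [False, True] f t z" for z
  have gc: "continuous_on {a..b} g" unfolding g_def
    by (intro continuous_intros cont_slice_x[OF sm]) (use inU t in auto)
  have K1: "((\<lambda>y. integral {a..y} g) has_real_derivative g x) (at x within {a..b})"
    by (rule integral_has_real_derivative[OF gc]) (auto simp: a_def b_def)
  have K0: "integral {a..y} g = 0" if "y \<in> {a..b}" for y
  proof -
    have "integral {a..y} g = integral {a..y} (\<lambda>z. pdi [True, False] f t z) - integral {a..y} (\<lambda>z. pdi [False, True] f t z)"
      unfolding g_def
      by (rule integral_diff; rule integrable_continuous_interval; rule cont_slice_x[OF sm]) (use inU t in auto)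
    then show ?thesis using key that by simp
  qed
  have K2: "((\<lambda>y. integral {a..y} g) has_real_derivative 0) (at x within {a..b})"
  proof (rule has_field_derivative_transform_within[of "\<lambda>_. 0" 0 x "{a..b}" 1])
    show "x \<in> {a..b}" by (simp add: a_def b_def)
    fix y assume "y \<in> {a..b}"
    then show "0 = integral {a..y} g" using K0 by simp
  qed simp_all
  have "g x = 0"
    using vector_derivative_unique_within_closed_interval[of a b x "\<lambda>y. integral {a..y} g"]
      K1 K2 by (auto simp: has_real_derivative_iff_has_vector_derivative a_def b_def)
  then show ?thesis by (simp add: g_def)
qed


lemma pdx_eq: "((\<lambda>y. F t y) has_real_derivative D) (at x) \<Longrightarrow> pdx F t x = D"
  unfolding pdx_def by (rule DERIV_imp_deriv)
lemma pdt_eq: "((\<lambda>s. F s x) has_real_derivative D) (at t) \<Longrightarrow> pdt F t x = D"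
  unfolding pdt_def by (rule DERIV_imp_deriv)

locale nsl =
  fixes mp mm gp gm cp cm T rl ru tl tu :: real
    and c \<rho> \<theta> u :: "real \<Rightarrow> real \<Rightarrow> real" and U :: "(real \<times> real) set"
  assumes pos: "mp > 0" "mm > 0" "gp > 1" "gm > 1" "cp > 0" "cm > 0"
    "T > 0" "rl > 0" "ru > 0" "tl > 0" "tu > 0"
  and U: "open U" "{0..T} \<times> UNIV \<subseteq> U"
  and sm: "smooth_on2 U c" "smooth_on2 U \<rho>" "smooth_on2 U \<theta>" "smooth_on2 U u"
  and per: "\<And>t x. c t (x + 1) = c t x \<and> \<rho> t (x + 1) = \<rho> t x \<and>
           \<theta> t (x + 1) = \<theta> t x \<and> u t (x + 1) = u t x"
  and eqs: "\<And>t x. t \<in> {0..T} \<Longrightarrow>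
       pdt \<rho> t x + pdx (\<lambda>t x. \<rho> t x * u t x) t x = 0 \<and>
       pdt (\<lambda>t x. \<rho> t x * c t x) t x + pdx (\<lambda>t x. \<rho> t x * c t x * u t x) t x = 0 \<and>
       pdt (\<lambda>t x. \<rho> t x * u t x) t x + pdx (\<lambda>t x. \<rho> t x * (u t x)\<^sup>2) t x
          = pdx (stress mp mm gp gm c \<rho> \<theta> u) t x \<and>
       pdt (\<lambda>t x. \<rho> t x * energy cp cm c \<theta> u t x) t x
         + pdx (\<lambda>t x. \<rho> t x * energy cp cm c \<theta> u t x * u t x) t x
         = pdx (\<lambda>t x. stress mp mm gp gm c \<rho> \<theta> u t x * u t x) t x"
  and bnd: "\<And>t x. t \<in> {0..T} \<Longrightarrow> 0 \<le> c t x \<and> c t x \<le> 1 \<and>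
          rl \<le> \<rho> t x \<and> \<rho> t x \<le> ru \<and> tl \<le> \<theta> t x \<and> \<theta> t x \<le> tu"
begin

lemma inU: "t \<in> {0..T} \<Longrightarrow> (t, x) \<in> U" using U by auto

lemma fs: "f \<in> {c, \<rho>, \<theta>, u} \<Longrightarrow> smooth_on2 U f" using sm by auto

lemma DXa: "f \<in> {c, \<rho>, \<theta>, u} \<Longrightarrow> t \<in> {0..T} \<Longrightarrow>
   ((\<lambda>y. pdi bs f t y) has_real_derivative pdi (False # bs) f t x) (at x)"
  by (rule smooth_dx[OF fs inU])
lemma DTa: "f \<in> {c, \<rho>, \<theta>, u} \<Longrightarrow> t \<in> {0..T} \<Longrightarrow>
   ((\<lambda>s. pdi bs f s x) has_real_derivative pdi (True # bs) f t x) (at t)"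
  by (rule smooth_dt[OF fs inU])
lemma contA: "f \<in> {c, \<rho>, \<theta>, u} \<Longrightarrow> K \<subseteq> {0..T} \<times> UNIV \<Longrightarrow>
   continuous_on K (\<lambda>p. pdi bs f (fst p) (snd p))"
  by (rule continuous_on_subset[OF smooth_cont[OF fs]]) (use U in auto)


lemma DXc: "t \<in> {0..T} \<Longrightarrow> ((\<lambda>y. c t y) has_real_derivative pdx c t x) (at x)"
  using DXa[where f=c and bs="[]" and t=t and x=x] by simp

lemma DXr: "t \<in> {0..T} \<Longrightarrow> ((\<lambda>y. \<rho> t y) has_real_derivative pdx \<rho> t x) (at x)"
  using DXa[where f=\<rho> and bs="[]" and t=t and x=x] by simp

lemma DXh: "t \<in> {0..T} \<Longrightarrow> ((\<lambda>y. \<theta> t y) has_real_derivative pdx \<theta> t x) (at x)"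
  using DXa[where f=\<theta> and bs="[]" and t=t and x=x] by simp

lemma DXu: "t \<in> {0..T} \<Longrightarrow> ((\<lambda>y. u t y) has_real_derivative pdx u t x) (at x)"
  using DXa[where f=u and bs="[]" and t=t and x=x] by simp

lemma DXc1: "t \<in> {0..T} \<Longrightarrow> ((\<lambda>y. (pdx c) t y) has_real_derivative pdx (pdx c) t x) (at x)"
  using DXa[where f=c and bs="[False]" and t=t and x=x] by simp

lemma DXr1: "t \<in> {0..T} \<Longrightarrow> ((\<lambda>y. (pdx \<rho>) t y) has_real_derivative pdx (pdx \<rho>) t x) (at x)"
  using DXa[where f=\<rho> and bs="[False]" and t=t and x=x] by simp

lemma DXh1: "t \<in> {0..T} \<Longrightarrow> ((\<lambda>y. (pdx \<theta>) t y) has_real_derivative pdx (pdx \<theta>) t x) (at x)"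
  using DXa[where f=\<theta> and bs="[False]" and t=t and x=x] by simp

lemma DXu1: "t \<in> {0..T} \<Longrightarrow> ((\<lambda>y. (pdx u) t y) has_real_derivative pdx (pdx u) t x) (at x)"
  using DXa[where f=u and bs="[False]" and t=t and x=x] by simp

lemma DXu2: "t \<in> {0..T} \<Longrightarrow> ((\<lambda>y. (pdx (pdx u)) t y) has_real_derivative pdx (pdx (pdx u)) t x) (at x)"
  using DXa[where f=u and bs="[False,False]" and t=t and x=x] by simp

lemma DTc: "t \<in> {0..T} \<Longrightarrow> ((\<lambda>s. c s x) has_real_derivative pdt c t x) (at t)"
  using DTa[where f=c and bs="[]" and t=t and x=x] by simp

lemma DTr: "t \<in> {0..T} \<Longrightarrow> ((\<lambda>s. \<rho> s x) has_real_derivative pdt \<rho> t x) (at t)"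
  using DTa[where f=\<rho> and bs="[]" and t=t and x=x] by simp

lemma DTh: "t \<in> {0..T} \<Longrightarrow> ((\<lambda>s. \<theta> s x) has_real_derivative pdt \<theta> t x) (at t)"
  using DTa[where f=\<theta> and bs="[]" and t=t and x=x] by simp

lemma DTu: "t \<in> {0..T} \<Longrightarrow> ((\<lambda>s. u s x) has_real_derivative pdt u t x) (at t)"
  using DTa[where f=u and bs="[]" and t=t and x=x] by simp

lemma DTu1: "t \<in> {0..T} \<Longrightarrow> ((\<lambda>s. (pdx u) s x) has_real_derivative pdt (pdx u) t x) (at t)"
  using DTa[where f=u and bs="[False]" and t=t and x=x] by simp

end

context nsl begin

definition "mu t x = mix mp mm (c t x)"
definition "gg t x = mix gp gm (c t x) - 1"
definition "cv t x = mix cp cm (c t x)"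
definition "p t x = gg t x * \<rho> t x * \<theta> t x"
definition "sg t x = mu t x * pdx u t x - p t x"
definition "px t x = (gp-gm) * pdx c t x * \<rho> t x * \<theta> t x + gg t x * (pdx \<rho> t x * \<theta> t x + \<rho> t x * pdx \<theta> t x)"
definition "sgx t x = (mp-mm) * pdx c t x * pdx u t x + mu t x * pdx (pdx u) t x - px t x"
definition "pxx t x = (gp-gm) * pdx (pdx c) t x * \<rho> t x * \<theta> t x
   + 2 * (gp-gm) * pdx c t x * (pdx \<rho> t x * \<theta> t x + \<rho> t x * pdx \<theta> t x)
   + gg t x * (pdx (pdx \<rho>) t x * \<theta> t x + 2 * pdx \<rho> t x * pdx \<theta> t x + \<rho> t x * pdx (pdx \<theta>) t x)"
definition "sgxx t x = (mp-mm) * pdx (pdx c) t x * pdx u t x + 2 * (mp-mm) * pdx c t x * pdx (pdx u) t x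
   + mu t x * pdx (pdx (pdx u)) t x - pxx t x"
definition "pt t x = (gp-gm) * pdt c t x * \<rho> t x * \<theta> t x + gg t x * (pdt \<rho> t x * \<theta> t x + \<rho> t x * pdt \<theta> t x)"
definition "sgt t x = (mp-mm) * pdt c t x * pdx u t x + mu t x * pdt (pdx u) t x - pt t x"

lemma DXmu: "t \<in> {0..T} \<Longrightarrow> ((\<lambda>y. mu t y) has_real_derivative (mp-mm) * pdx c t x) (at x)"
  unfolding mu_def mix_def by (auto intro!: derivative_eq_intros DXc simp: algebra_simps)
lemma DTmu: "t \<in> {0..T} \<Longrightarrow> ((\<lambda>s. mu s x) has_real_derivative (mp-mm) * pdt c t x) (at t)"
  unfolding mu_def mix_def by (auto intro!: derivative_eq_intros DTc simp: algebra_simps)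
lemma DXgg: "t \<in> {0..T} \<Longrightarrow> ((\<lambda>y. gg t y) has_real_derivative (gp-gm) * pdx c t x) (at x)"
  unfolding gg_def mix_def by (auto intro!: derivative_eq_intros DXc simp: algebra_simps)
lemma DTgg: "t \<in> {0..T} \<Longrightarrow> ((\<lambda>s. gg s x) has_real_derivative (gp-gm) * pdt c t x) (at t)"
  unfolding gg_def mix_def by (auto intro!: derivative_eq_intros DTc simp: algebra_simps)
lemma DXcv: "t \<in> {0..T} \<Longrightarrow> ((\<lambda>y. cv t y) has_real_derivative (cp-cm) * pdx c t x) (at x)"
  unfolding cv_def mix_def by (auto intro!: derivative_eq_intros DXc simp: algebra_simps)
lemma DTcv: "t \<in> {0..T} \<Longrightarrow> ((\<lambda>s. cv s x) has_real_derivative (cp-cm) * pdt c t x) (at t)"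
  unfolding cv_def mix_def by (auto intro!: derivative_eq_intros DTc simp: algebra_simps)
lemma DXp: "t \<in> {0..T} \<Longrightarrow> ((\<lambda>y. p t y) has_real_derivative px t x) (at x)"
  unfolding p_def px_def by (auto intro!: derivative_eq_intros DXgg DXr DXh simp: algebra_simps)
lemma DTp: "t \<in> {0..T} \<Longrightarrow> ((\<lambda>s. p s x) has_real_derivative pt t x) (at t)"
  unfolding p_def pt_def by (auto intro!: derivative_eq_intros DTgg DTr DTh simp: algebra_simps)
lemma DXsg: "t \<in> {0..T} \<Longrightarrow> ((\<lambda>y. sg t y) has_real_derivative sgx t x) (at x)"
  unfolding sg_def sgx_def by (auto intro!: derivative_eq_intros DXmu DXu1 DXp simp: algebra_simps)
lemma DTsg: "t \<in> {0..T} \<Longrightarrow> ((\<lambda>s. sg s x) has_real_derivative sgt t x) (at t)"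
  unfolding sg_def sgt_def by (auto intro!: derivative_eq_intros DTmu DTu1 DTp simp: algebra_simps)
lemma DXpx: "t \<in> {0..T} \<Longrightarrow> ((\<lambda>y. px t y) has_real_derivative pxx t x) (at x)"
  unfolding px_def pxx_def by (auto intro!: derivative_eq_intros DXgg DXr DXh DXc1 DXr1 DXh1 DXc simp: algebra_simps)
lemma DXsgx: "t \<in> {0..T} \<Longrightarrow> ((\<lambda>y. sgx t y) has_real_derivative sgxx t x) (at x)"
  unfolding sgx_def sgxx_def by (auto intro!: derivative_eq_intros DXmu DXu1 DXu2 DXc1 DXpx simp: algebra_simps)



lemma mix_bnd: "0 \<le> (s::real) \<Longrightarrow> s \<le> 1 \<Longrightarrow> min a b \<le> mix a b s \<and> mix a b s \<le> max a b"
proof -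
  assume s: "0 \<le> s" "s \<le> 1"
  have "s * min a b \<le> s * a" "(1 - s) * min a b \<le> (1 - s) * b"
       "s * a \<le> s * max a b" "(1 - s) * b \<le> (1 - s) * max a b"
    using s by (auto intro!: mult_left_mono)
  then have "s * min a b + (1 - s) * min a b \<le> mix a b s" "mix a b s \<le> s * max a b + (1 - s) * max a b"
    unfolding mix_def by linarith+
  then show ?thesis by (simp add: algebra_simps)
qed

lemma cb: "t \<in> {0..T} \<Longrightarrow> 0 \<le> c t x \<and> c t x \<le> 1" using bnd by blast
lemma rb: "t \<in> {0..T} \<Longrightarrow> rl \<le> \<rho> t x \<and> \<rho> t x \<le> ru" using bnd by blast
lemma hb: "t \<in> {0..T} \<Longrightarrow> tl \<le> \<theta> t x \<and> \<theta> t x \<le> tu" using bnd by blast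
lemma mub: "t \<in> {0..T} \<Longrightarrow> min mp mm \<le> mu t x \<and> mu t x \<le> max mp mm"
  unfolding mu_def using cb mix_bnd by blast
lemma ggb: "t \<in> {0..T} \<Longrightarrow> min gp gm - 1 \<le> gg t x \<and> gg t x \<le> max gp gm - 1"
  unfolding gg_def using cb mix_bnd by fastforce
lemma cvb: "t \<in> {0..T} \<Longrightarrow> min cp cm \<le> cv t x \<and> cv t x \<le> max cp cm"
  unfolding cv_def using cb mix_bnd by blast
lemma mupos: "t \<in> {0..T} \<Longrightarrow> mu t x > 0" using mub[of t x] pos by linarith
lemma ggpos: "t \<in> {0..T} \<Longrightarrow> gg t x > 0" using ggb[of t x] pos by linarith
lemma cvpos: "t \<in> {0..T} \<Longrightarrow> cv t x > 0" using cvb[of t x] pos by linarith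
lemma rpos: "t \<in> {0..T} \<Longrightarrow> \<rho> t x > 0" using rb[of t x] pos by linarith
lemma hpos: "t \<in> {0..T} \<Longrightarrow> \<theta> t x > 0" using hb[of t x] pos by linarith

lemma stress_sg: "stress mp mm gp gm c \<rho> \<theta> u = sg"
  by (intro ext) (simp add: stress_def sg_def pressure_def p_def mu_def gg_def)
lemma energy_eq: "energy cp cm c \<theta> u t x = (u t x)\<^sup>2 / 2 + cv t x * \<theta> t x"
  by (simp add: energy_def cv_def)

lemma E1: assumes t: "t \<in> {0..T}"
  shows "pdt \<rho> t x = - (pdx \<rho> t x * u t x + \<rho> t x * pdx u t x)"
proof -
  have "pdx (\<lambda>t x. \<rho> t x * u t x) t x = pdx \<rho> t x * u t x + \<rho> t x * pdx u t x"
    by (rule pdx_eq) (auto intro!: derivative_eq_intros DXr DXu t)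
  then show ?thesis using eqs[OF t, of x] by simp
qed

lemma E2: assumes t: "t \<in> {0..T}"
  shows "pdt c t x = - u t x * pdx c t x"
proof -
  have a: "pdt (\<lambda>t x. \<rho> t x * c t x) t x = pdt \<rho> t x * c t x + \<rho> t x * pdt c t x"
    by (rule pdt_eq) (auto intro!: derivative_eq_intros DTr DTc t)
  have b: "pdx (\<lambda>t x. \<rho> t x * c t x * u t x) t x = pdx \<rho> t x * c t x * u t x + \<rho> t x * pdx c t x * u t x + \<rho> t x * c t x * pdx u t x"
    by (rule pdx_eq) (auto intro!: derivative_eq_intros DXr DXu DXc t simp: algebra_simps)
  have "\<rho> t x * (pdt c t x + u t x * pdx c t x) = 0"
    using eqs[OF t, of x] a b E1[OF t, of x] by (simp add: algebra_simps)
  then have "pdt c t x + u t x * pdx c t x = 0" using rpos[OF t, of x] by simp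
  then show ?thesis by linarith
qed

lemma E3: assumes t: "t \<in> {0..T}"
  shows "pdt u t x = sgx t x / \<rho> t x - u t x * pdx u t x"
proof -
  have a: "pdt (\<lambda>t x. \<rho> t x * u t x) t x = pdt \<rho> t x * u t x + \<rho> t x * pdt u t x"
    by (rule pdt_eq) (auto intro!: derivative_eq_intros DTr DTu t)
  have b: "pdx (\<lambda>t x. \<rho> t x * (u t x)\<^sup>2) t x = pdx \<rho> t x * (u t x)\<^sup>2 + \<rho> t x * (2 * u t x * pdx u t x)"
    by (rule pdx_eq) (auto intro!: derivative_eq_intros DXr DXu t simp: algebra_simps)
  have s: "pdx sg t x = sgx t x" by (rule pdx_eq) (rule DXsg[OF t])
  have "\<rho> t x * (pdt u t x + u t x * pdx u t x) = sgx t x"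
    using eqs[OF t, of x] a b s E1[OF t, of x] by (simp add: algebra_simps stress_sg power2_eq_square)
  then show ?thesis using rpos[OF t, of x] by (simp add: field_simps)
qed

lemma E4: assumes t: "t \<in> {0..T}"
  shows "pdt \<theta> t x = sg t x * pdx u t x / (\<rho> t x * cv t x) - u t x * pdx \<theta> t x"
proof -
  have a: "pdt (\<lambda>t x. \<rho> t x * energy cp cm c \<theta> u t x) t x =
     pdt \<rho> t x * ((u t x)\<^sup>2 / 2 + cv t x * \<theta> t x) + \<rho> t x * (u t x * pdt u t x + (cp-cm) * pdt c t x * \<theta> t x + cv t x * pdt \<theta> t x)"
    unfolding energy_eq
    by (rule pdt_eq) (auto intro!: derivative_eq_intros DTr DTu DTcv DTh t simp: algebra_simps)
  have b: "pdx (\<lambda>t x. \<rho> t x * energy cp cm c \<theta> u t x * u t x) t x =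
     pdx \<rho> t x * ((u t x)\<^sup>2 / 2 + cv t x * \<theta> t x) * u t x
     + \<rho> t x * (u t x * pdx u t x + (cp-cm) * pdx c t x * \<theta> t x + cv t x * pdx \<theta> t x) * u t x
     + \<rho> t x * ((u t x)\<^sup>2 / 2 + cv t x * \<theta> t x) * pdx u t x"
    unfolding energy_eq
    by (rule pdx_eq) (auto intro!: derivative_eq_intros DXr DXu DXcv DXh t simp: algebra_simps)
  have d: "pdx (\<lambda>t x. stress mp mm gp gm c \<rho> \<theta> u t x * u t x) t x = sgx t x * u t x + sg t x * pdx u t x"
    unfolding stress_sg
    by (rule pdx_eq) (auto intro!: derivative_eq_intros DXsg DXu t simp: algebra_simps)
  have e4: "pdt (\<lambda>t x. \<rho> t x * energy cp cm c \<theta> u t x) t x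
         + pdx (\<lambda>t x. \<rho> t x * energy cp cm c \<theta> u t x * u t x) t x
         = pdx (\<lambda>t x. stress mp mm gp gm c \<rho> \<theta> u t x * u t x) t x"
    using eqs[OF t, of x] by blast
  note e4' = e4[unfolded a b d]
  have E3': "\<rho> t x * pdt u t x = sgx t x - \<rho> t x * u t x * pdx u t x"
    using E3[OF t, of x] rpos[OF t, of x] by (simp add: field_simps)
  let ?E = "(u t x)\<^sup>2 / 2 + cv t x * \<theta> t x"
  have id: "\<rho> t x * cv t x * (pdt \<theta> t x + u t x * pdx \<theta> t x) - sg t x * pdx u t x =
     ((pdt \<rho> t x * ((u t x)\<^sup>2 / 2 + cv t x * \<theta> t x) + \<rho> t x * (u t x * pdt u t x + (cp-cm) * pdt c t x * \<theta> t x + cv t x * pdt \<theta> t x))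
      + (pdx \<rho> t x * ((u t x)\<^sup>2 / 2 + cv t x * \<theta> t x) * u t x
     + \<rho> t x * (u t x * pdx u t x + (cp-cm) * pdx c t x * \<theta> t x + cv t x * pdx \<theta> t x) * u t x
     + \<rho> t x * ((u t x)\<^sup>2 / 2 + cv t x * \<theta> t x) * pdx u t x)
      - (sgx t x * u t x + sg t x * pdx u t x))
     - ?E * (pdt \<rho> t x + (pdx \<rho> t x * u t x + \<rho> t x * pdx u t x))
     - u t x * (\<rho> t x * pdt u t x - (sgx t x - \<rho> t x * u t x * pdx u t x))
     - \<rho> t x * (cp - cm) * \<theta> t x * (pdt c t x + u t x * pdx c t x)"
    by (simp add: algebra_simps power2_eq_square)
  have e: "\<rho> t x * cv t x * (pdt \<theta> t x + u t x * pdx \<theta> t x) = sg t x * pdx u t x"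
    using id e4' E1[OF t, of x] E2[OF t, of x] E3' by simp
  then show ?thesis using rpos[OF t, of x] cvpos[OF t, of x] by (simp add: field_simps)
qed

lemma E5: assumes t: "t \<in> {0..T}"
  shows "pdt (pdx u) t x = sgxx t x / \<rho> t x - sgx t x * pdx \<rho> t x / (\<rho> t x)\<^sup>2
      - (pdx u t x)\<^sup>2 - u t x * pdx (pdx u) t x"
proof -
  have cl: "pdt (pdx u) t x = pdx (pdt u) t x"
    using clairaut[OF sm(4) U(2) pos(7) t, of x] by simp
  have f: "(\<lambda>y. pdt u t y) = (\<lambda>y. sgx t y / \<rho> t y - u t y * pdx u t y)"
    using E3[OF t] by auto
  have "pdx (pdt u) t x = deriv (\<lambda>y. sgx t y / \<rho> t y - u t y * pdx u t y) x"
    unfolding pdx_def f ..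
  also have "\<dots> = sgxx t x / \<rho> t x - sgx t x * pdx \<rho> t x / (\<rho> t x)\<^sup>2
      - (pdx u t x)\<^sup>2 - u t x * pdx (pdx u) t x"
    using rpos[OF t, of x]
    by (intro DERIV_imp_deriv) (auto intro!: derivative_eq_intros DXsgx DXr DXu DXu1 t
         simp: field_simps power2_eq_square)
  finally show ?thesis using cl by simp
qed

end

context nsl begin

definition "F t x = (sg t x)\<^sup>2 / mu t x"
definition "Ft t x = 2 * sg t x * sgt t x / mu t x - (sg t x)\<^sup>2 * ((mp-mm) * pdt c t x) / (mu t x)\<^sup>2"
definition "G t x = 2 * sg t x * sgx t x / \<rho> t x - u t x * (sg t x)\<^sup>2 / mu t x"
definition "Gx t x = 2 * (sgx t x)\<^sup>2 / \<rho> t x + 2 * sg t x * sgxx t x / \<rho> t x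
   - 2 * sg t x * sgx t x * pdx \<rho> t x / (\<rho> t x)\<^sup>2 - pdx u t x * (sg t x)\<^sup>2 / mu t x
   - u t x * (2 * sg t x * sgx t x / mu t x - (sg t x)\<^sup>2 * ((mp-mm) * pdx c t x) / (mu t x)\<^sup>2)"
definition "Q t x = - 2 * (sgx t x)\<^sup>2 / \<rho> t x + (1 - 2 * (1 + gg t x / cv t x)) * (sg t x)\<^sup>2 * pdx u t x / mu t x"

lemma DTF: "t \<in> {0..T} \<Longrightarrow> ((\<lambda>s. F s x) has_real_derivative Ft t x) (at t)"
  using mupos[of t x] unfolding F_def Ft_def
  by (auto intro!: derivative_eq_intros DTsg DTmu simp: field_simps power2_eq_square)

lemma DXG: "t \<in> {0..T} \<Longrightarrow> ((\<lambda>y. G t y) has_real_derivative Gx t x) (at x)"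
  using mupos[of t x] rpos[of t x] unfolding G_def Gx_def
  by (auto intro!: derivative_eq_intros DXsg DXsgx DXr DXu DXmu simp: field_simps power2_eq_square)

lemma FtQ: assumes t: "t \<in> {0..T}" shows "Ft t x = Q t x + Gx t x"
proof -
  have nz: "\<rho> t x \<noteq> 0" "mu t x \<noteq> 0" "cv t x \<noteq> 0"
    using rpos[OF t, of x] mupos[OF t, of x] cvpos[OF t, of x] by auto
  have mu: "mu t x = mp * c t x + mm * (1 - c t x)" by (simp add: mu_def mix_def algebra_simps)
  have gg: "gg t x = gp * c t x + gm * (1 - c t x) - 1" by (simp add: gg_def mix_def algebra_simps)
  show ?thesis
    unfolding Ft_def Q_def Gx_def sgt_def pt_def E1[OF t] E2[OF t] E4[OF t] E5[OF t]
    unfolding sg_def sgx_def px_def p_def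
    using nz by (simp add: field_simps) (simp add: algebra_simps power2_eq_square)
qed



definition "en t x = cv t x * ln (\<theta> t x) - gg t x * ln (\<rho> t x)"
definition "Sn t x = \<rho> t x * en t x"
definition "Snt t x = pdt \<rho> t x * en t x + \<rho> t x * ((cp-cm) * pdt c t x * ln (\<theta> t x) + cv t x * pdt \<theta> t x / \<theta> t x
    - (gp-gm) * pdt c t x * ln (\<rho> t x) - gg t x * pdt \<rho> t x / \<rho> t x)"
definition "Hn t x = \<rho> t x * en t x * u t x"
definition "Hnx t x = pdx \<rho> t x * en t x * u t x + \<rho> t x * ((cp-cm) * pdx c t x * ln (\<theta> t x) + cv t x * pdx \<theta> t x / \<theta> t x
    - (gp-gm) * pdx c t x * ln (\<rho> t x) - gg t x * pdx \<rho> t x / \<rho> t x) * u t x + \<rho> t x * en t x * pdx u t x"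

lemma DTSn: "t \<in> {0..T} \<Longrightarrow> ((\<lambda>s. Sn s x) has_real_derivative Snt t x) (at t)"
  using hpos[of t x] rpos[of t x] unfolding Sn_def Snt_def en_def
  by (auto intro!: derivative_eq_intros DTr DTh DTcv DTgg simp: field_simps)

lemma DXHn: "t \<in> {0..T} \<Longrightarrow> ((\<lambda>y. Hn t y) has_real_derivative Hnx t x) (at x)"
  using hpos[of t x] rpos[of t x] unfolding Hn_def Hnx_def en_def
  by (auto intro!: derivative_eq_intros DXr DXh DXcv DXgg DXu simp: field_simps)

lemma SntQ: assumes t: "t \<in> {0..T}" shows "Snt t x = mu t x * (pdx u t x)\<^sup>2 / \<theta> t x - Hnx t x"
proof -
  have nz: "\<rho> t x \<noteq> 0" "\<theta> t x \<noteq> 0" "cv t x \<noteq> 0"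
    using rpos[OF t, of x] hpos[OF t, of x] cvpos[OF t, of x] by auto
  show ?thesis
    unfolding Snt_def Hnx_def E1[OF t] E2[OF t] E4[OF t] en_def
    unfolding sg_def p_def
    using nz by (simp add: field_simps) (simp add: algebra_simps power2_eq_square)
qed

end


lemma gron:
  fixes Y S Yd Sd W :: "real \<Rightarrow> real" and T w a1 b1 Sm Y0 :: real
  assumes T: "T > 0" and w: "w > 0" and a1: "a1 \<ge> 0" and b1: "b1 \<ge> 0"
  and DY: "\<And>t. t \<in> {0..T} \<Longrightarrow> (Y has_real_derivative Yd t) (at t within {0..T})"
  and DS: "\<And>t. t \<in> {0..T} \<Longrightarrow> (S has_real_derivative Sd t) (at t within {0..T})"
  and IY: "\<And>t. t \<in> {0..T} \<Longrightarrow> Yd t \<le> - w * W t + (a1 + b1 * Sd t) * Y t"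
  and Ypos: "\<And>t. t \<in> {0..T} \<Longrightarrow> 0 \<le> Y t"
  and Wpos: "\<And>t. t \<in> {0..T} \<Longrightarrow> 0 \<le> W t"
  and Sb: "\<And>t. t \<in> {0..T} \<Longrightarrow> \<bar>S t\<bar> \<le> Sm" and Y0: "Y 0 \<le> Y0"
  shows "\<forall>t\<in>{0..T}. Y t \<le> Y0 * exp (a1 * T + 2 * b1 * Sm)"
proof
  fix t assume t: "t \<in> {0..T}"
  define E where "E s = exp (- (a1 * s + b1 * S s))" for s
  define \<Phi> where "\<Phi> s = Y s * E s" for s
  define \<Phi>' where "\<Phi>' s = Yd s * E s - Y s * E s * (a1 + b1 * Sd s)" for s
  have D\<Phi>: "(\<Phi> has_real_derivative \<Phi>' s) (at s within {0..t})" if s: "s \<in> {0..t}" for s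
  proof -
    have sT: "s \<in> {0..T}" using s t by auto
    have "(\<Phi> has_real_derivative \<Phi>' s) (at s within {0..T})"
      unfolding \<Phi>_def \<Phi>'_def E_def
      by (rule derivative_eq_intros DY[OF sT] DS[OF sT] refl)+ (simp add: algebra_simps)
    then show ?thesis by (rule has_field_derivative_subset) (use t in auto)
  qed
  have le0: "\<Phi>' s \<le> 0" if s: "s \<in> {0..t}" for s
  proof -
    have sT: "s \<in> {0..T}" using s t by auto
    have m: "(a1 + b1 * Sd s) * Y s = Y s * (a1 + b1 * Sd s)" by simp
    have "0 \<le> w * W s" using Wpos[OF sT] w by simp
    then have "Yd s - Y s * (a1 + b1 * Sd s) \<le> 0" using IY[OF sT] m by linarith
    then have "E s * (Yd s - Y s * (a1 + b1 * Sd s)) \<le> 0"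
      by (simp add: E_def mult_nonneg_nonpos)
    then show ?thesis by (simp add: \<Phi>'_def algebra_simps)
  qed
  have "(\<Phi>' has_integral (\<Phi> t - \<Phi> 0)) {0..t}"
    by (rule fundamental_theorem_of_calculus) (use t D\<Phi> in \<open>auto simp: has_real_derivative_iff_has_vector_derivative[symmetric]\<close>)
  then have "\<Phi> t - \<Phi> 0 \<le> 0"
    by (rule has_integral_le[OF _ has_integral_0]) (use le0 in auto)
  then have "Y t * E t \<le> Y 0 * E 0" by (simp add: \<Phi>_def)
  then have "Y t * E t * exp (a1 * t + b1 * S t) \<le> Y 0 * E 0 * exp (a1 * t + b1 * S t)"
    by (rule mult_right_mono) simp
  then have "Y t \<le> Y 0 * exp (a1 * t + b1 * S t - b1 * S 0)"
    by (simp add: E_def mult.assoc exp_add[symmetric] exp_diff)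
  also have "\<dots> \<le> Y0 * exp (a1 * T + 2 * b1 * Sm)"
  proof (rule mult_mono)
    have "b1 * S t \<le> b1 * Sm" "- (b1 * S 0) \<le> b1 * Sm" "a1 * t \<le> a1 * T"
      using Sb[OF t] Sb[of 0] T t b1 a1 by (auto intro!: mult_left_mono simp: abs_le_iff)
        (smt (verit) mult_minus_right mult_left_mono)
    then show "exp (a1 * t + b1 * S t - b1 * S 0) \<le> exp (a1 * T + 2 * b1 * Sm)" by simp
  qed (use Y0 Ypos[of 0] T in auto)
  finally show "Y t \<le> Y0 * exp (a1 * T + 2 * b1 * Sm)" .
qed

lemma gron2:
  fixes Y S Yd Sd W h :: "real \<Rightarrow> real" and T w a1 b1 Sm Y0 Ym e1 e2 e3 :: real
  assumes T: "T > 0" and w: "w > 0" and a1: "a1 \<ge> 0" and b1: "b1 \<ge> 0"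
  and e: "e1 \<ge> 0" "e2 \<ge> 0" "e3 \<ge> 0"
  and DY: "\<And>t. t \<in> {0..T} \<Longrightarrow> (Y has_real_derivative Yd t) (at t within {0..T})"
  and DS: "\<And>t. t \<in> {0..T} \<Longrightarrow> (S has_real_derivative Sd t) (at t within {0..T})"
  and IY: "\<And>t. t \<in> {0..T} \<Longrightarrow> Yd t \<le> - w * W t + (a1 + b1 * Sd t) * Y t"
  and Ypos: "\<And>t. t \<in> {0..T} \<Longrightarrow> 0 \<le> Y t"
  and Sdpos: "\<And>t. t \<in> {0..T} \<Longrightarrow> 0 \<le> Sd t"
  and Yb: "\<And>t. t \<in> {0..T} \<Longrightarrow> Y t \<le> Ym"
  and Sb: "\<And>t. t \<in> {0..T} \<Longrightarrow> \<bar>S t\<bar> \<le> Sm" and Y0: "Y 0 \<le> Y0"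
  and hb: "\<And>t. t \<in> {0..T} \<Longrightarrow> h t \<le> e1 * Sd t + e2 * W t + e3"
  shows "integral {0..T} h \<le> (e1 + e2 * b1 * Ym / w) * (2 * Sm) + (e2 / w) * Y0 + (e3 + e2 * a1 * Ym / w) * T"
proof -
  have Ym: "Ym \<ge> 0" using Ypos[of 0] Yb[of 0] T by auto
  have Sm: "Sm \<ge> 0" using Sb[of 0] T by auto
  have Y00: "Y0 \<ge> 0" using Ypos[of 0] Y0 T by auto
  define K1 where "K1 = e1 + e2 * b1 * Ym / w"
  define K3 where "K3 = e3 + e2 * a1 * Ym / w"
  have K1: "K1 \<ge> 0" "K3 \<ge> 0" using e b1 a1 Ym w by (auto simp: K1_def K3_def)
  define R where "R s = K1 * Sd s - (e2 / w) * Yd s + K3" for s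
  have Ri: "(R has_integral (K1 * S T - (e2 / w) * Y T + K3 * T) - (K1 * S 0 - (e2 / w) * Y 0 + K3 * 0)) {0..T}"
  proof (rule fundamental_theorem_of_calculus)
    fix s assume s: "s \<in> {0..T}"
    have "((\<lambda>s. K1 * S s - (e2 / w) * Y s + K3 * s) has_real_derivative R s) (at s within {0..T})"
      unfolding R_def by (rule derivative_eq_intros DY[OF s] DS[OF s] refl)+ simp
    then show "((\<lambda>s. K1 * S s - (e2 / w) * Y s + K3 * s) has_vector_derivative R s) (at s within {0..T})"
      by (simp add: has_real_derivative_iff_has_vector_derivative)
  qed (use T in simp)
  have hR: "h s \<le> R s" if s: "s \<in> {0..T}" for s
  proof -
    have "w * W s \<le> (a1 + b1 * Sd s) * Y s - Yd s" using IY[OF s] by simp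
    also have "\<dots> \<le> (a1 + b1 * Sd s) * Ym - Yd s"
      using Yb[OF s] a1 b1 Sdpos[OF s] by (simp add: mult_left_mono)
    finally have "W s \<le> ((a1 + b1 * Sd s) * Ym - Yd s) / w" using w by (simp add: field_simps)
    then have "e2 * W s \<le> e2 * (((a1 + b1 * Sd s) * Ym - Yd s) / w)" by (rule mult_left_mono) (use e in auto)
    moreover have "e2 * (((a1 + b1 * Sd s) * Ym - Yd s) / w) = e2*a1*Ym/w + (e2*b1*Ym/w)*Sd s - (e2/w)*Yd s"
      using w by (simp add: field_simps)
    moreover have "R s = e1*Sd s + (e2*b1*Ym/w)*Sd s - (e2/w)*Yd s + e3 + e2*a1*Ym/w"
      by (simp add: R_def K1_def K3_def algebra_simps)
    ultimately show ?thesis using hb[OF s] by linarith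
  qed
  have bnd: "(K1 * S T - (e2 / w) * Y T + K3 * T) - (K1 * S 0 - (e2 / w) * Y 0 + K3 * 0)
       \<le> K1 * (2 * Sm) + (e2 / w) * Y0 + K3 * T"
  proof -
    have "K1 * (S T - S 0) \<le> K1 * (2 * Sm)" using Sb[of T] Sb[of 0] T K1
      by (intro mult_left_mono) (auto simp: abs_le_iff)
    moreover have "(e2 / w) * Y T \<ge> 0" using Ypos[of T] T e w by simp
    moreover have "(e2 / w) * Y 0 \<le> (e2 / w) * Y0" by (rule mult_left_mono) (use Y0 e w in auto)
    ultimately show ?thesis by (simp add: algebra_simps)
  qed
  show ?thesis
  proof (cases "h integrable_on {0..T}")
    case True
    then have "integral {0..T} h \<le> (K1 * S T - (e2 / w) * Y T + K3 * T) - (K1 * S 0 - (e2 / w) * Y 0 + K3 * 0)"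
      using has_integral_le[OF integrable_integral[OF True] Ri hR] by simp
    then show ?thesis using bnd unfolding K1_def K3_def by linarith
  next
    case False
    then have "integral {0..T} h = 0" by (simp add: not_integrable_integral)
    moreover have "0 \<le> K1 * (2 * Sm) + (e2 / w) * Y0 + K3 * T"
      using K1 Sm Y00 e w T by simp
    ultimately show ?thesis unfolding K1_def K3_def by linarith
  qed
qed


lemma sob:
  fixes f f' :: "real \<Rightarrow> real"
  assumes D: "\<And>x. (f has_real_derivative f' x) (at x)" and c: "continuous_on {0..1} f'"
    and x: "x \<in> {0..1}"
  shows "(f x)\<^sup>2 \<le> 2 * integral {0..1} (\<lambda>y. (f y)\<^sup>2) + integral {0..1} (\<lambda>y. (f' y)\<^sup>2)"
proof -
  have fc: "continuous_on S f" for S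
    by (rule DERIV_continuous_on) (rule has_field_derivative_at_within[OF D])
  have f2c: "continuous_on {0..1} (\<lambda>y. (f y)\<^sup>2)" by (intro continuous_intros fc)
  have hc: "continuous_on {0..1} (\<lambda>y. (f y)\<^sup>2 + (f' y)\<^sup>2)" by (intro continuous_intros fc c)
  obtain y where y: "y \<in> {0..1}" and ymin: "\<And>z. z \<in> {0..1} \<Longrightarrow> (f y)\<^sup>2 \<le> (f z)\<^sup>2"
    using continuous_attains_inf[OF compact_Icc _ f2c] by auto
  define Z where "Z = integral {0..1} (\<lambda>y. (f y)\<^sup>2)"
  define W where "W = integral {0..1} (\<lambda>y. (f' y)\<^sup>2)"
  define A where "A = integral {0..1} (\<lambda>y. (f y)\<^sup>2 + (f' y)\<^sup>2)"
  have AZW: "A = Z + W" unfolding A_def Z_def W_def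
    by (rule integral_add) (intro integrable_continuous_interval continuous_intros fc c)+
  have Zy: "(f y)\<^sup>2 \<le> Z"
  proof -
    have "integral {0..1::real} (\<lambda>_. (f y)\<^sup>2) \<le> Z" unfolding Z_def
      by (rule integral_le[where f="\<lambda>_. (f y)\<^sup>2" and g="\<lambda>z. (f z)\<^sup>2"])
         (use ymin f2c in \<open>auto intro: integrable_continuous_interval\<close>)
    then show ?thesis by simp
  qed
  have gb: "\<bar>(f b)\<^sup>2 - (f a)\<^sup>2\<bar> \<le> A" if ab: "0 \<le> a" "a \<le> b" "b \<le> 1" for a b
  proof -
    have gi: "((\<lambda>z. 2 * f z * f' z) has_integral ((f b)\<^sup>2 - (f a)\<^sup>2)) {a..b}"
    proof (rule fundamental_theorem_of_calculus[OF ab(2)])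
      fix z assume "z \<in> {a..b}"
      have "((\<lambda>z. (f z)\<^sup>2) has_real_derivative 2 * f z * f' z) (at z)"
        by (rule derivative_eq_intros D refl)+ simp
      then show "((\<lambda>z. (f z)\<^sup>2) has_vector_derivative 2 * f z * f' z) (at z within {a..b})"
        by (simp add: has_real_derivative_iff_has_vector_derivative[symmetric] has_field_derivative_at_within)
    qed
    have sub: "{a..b} \<subseteq> {0..1}" using ab by auto
    have hcab: "continuous_on {a..b} (\<lambda>y. (f y)\<^sup>2 + (f' y)\<^sup>2)" by (rule continuous_on_subset[OF hc sub])
    have "norm (integral {a..b} (\<lambda>z. 2 * f z * f' z)) \<le> integral {a..b} (\<lambda>y. (f y)\<^sup>2 + (f' y)\<^sup>2)"
    proof (rule integral_norm_bound_integral)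
      show "(\<lambda>z. 2 * f z * f' z) integrable_on {a..b}" using gi by blast
      show "(\<lambda>y. (f y)\<^sup>2 + (f' y)\<^sup>2) integrable_on {a..b}" by (rule integrable_continuous_interval[OF hcab])
      fix z
      have "0 \<le> (\<bar>f z\<bar> - \<bar>f' z\<bar>)\<^sup>2" by simp
      then have "2 * (\<bar>f z\<bar> * \<bar>f' z\<bar>) \<le> \<bar>f z\<bar>\<^sup>2 + \<bar>f' z\<bar>\<^sup>2"
        by (simp add: power2_eq_square algebra_simps)
      then show "norm (2 * f z * f' z) \<le> (f z)\<^sup>2 + (f' z)\<^sup>2" by (simp add: abs_mult)
    qed
    also have "\<dots> \<le> A" unfolding A_def
      by (rule integral_subset_le[OF sub]) (use hcab hc in \<open>auto intro: integrable_continuous_interval\<close>)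
    finally show ?thesis using gi by (simp add: integral_unique)
  qed
  have "(f x)\<^sup>2 - (f y)\<^sup>2 \<le> A"
  proof (cases "y \<le> x")
    case True then show ?thesis using gb[of y x] x y by auto
  next
    case False then show ?thesis using gb[of x y] x y by auto
  qed
  then show ?thesis using Zy AZW unfolding Z_def W_def by linarith
qed


context nsl begin

definition "Y t = integral {0..1} (\<lambda>x. F t x)"
definition "Sf t = integral {0..1} (\<lambda>x. Sn t x)"
definition "Yd t = integral {0..1} (\<lambda>x. Q t x)"
definition "Sd t = integral {0..1} (\<lambda>x. mu t x * (pdx u t x)\<^sup>2 / \<theta> t x)"
definition "Z t = integral {0..1} (\<lambda>x. (sg t x)\<^sup>2)"
definition "W t = integral {0..1} (\<lambda>x. (sgx t x)\<^sup>2)"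

abbreviation "KK \<equiv> {0..T} \<times> {0..1::real}"

lemma KKsub: "KK \<subseteq> {0..T} \<times> UNIV" by auto

lemma cKc: "continuous_on KK (\<lambda>p. c (fst p) (snd p))" using contA[OF _ KKsub, where f=c and bs="[]"] by simp
lemma cKr: "continuous_on KK (\<lambda>p. \<rho> (fst p) (snd p))" using contA[OF _ KKsub, where f=\<rho> and bs="[]"] by simp
lemma cKh: "continuous_on KK (\<lambda>p. \<theta> (fst p) (snd p))" using contA[OF _ KKsub, where f=\<theta> and bs="[]"] by simp
lemma cKu: "continuous_on KK (\<lambda>p. u (fst p) (snd p))" using contA[OF _ KKsub, where f=u and bs="[]"] by simp
lemma cKu1: "continuous_on KK (\<lambda>p. pdx u (fst p) (snd p))" using contA[OF _ KKsub, where f=u and bs="[False]"] by simp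
lemma cKct: "continuous_on KK (\<lambda>p. pdt c (fst p) (snd p))" using contA[OF _ KKsub, where f=c and bs="[True]"] by simp
lemma cKrt: "continuous_on KK (\<lambda>p. pdt \<rho> (fst p) (snd p))" using contA[OF _ KKsub, where f=\<rho> and bs="[True]"] by simp
lemma cKht: "continuous_on KK (\<lambda>p. pdt \<theta> (fst p) (snd p))" using contA[OF _ KKsub, where f=\<theta> and bs="[True]"] by simp
lemma cKu1t: "continuous_on KK (\<lambda>p. pdt (pdx u) (fst p) (snd p))" using contA[OF _ KKsub, where f=u and bs="[True,False]"] by simp

lemma KKt: "q \<in> KK \<Longrightarrow> fst q \<in> {0..T}" by auto

lemma cKmu: "continuous_on KK (\<lambda>p. mu (fst p) (snd p))"
  unfolding mu_def mix_def by (intro continuous_intros cKc)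
lemma cKgg: "continuous_on KK (\<lambda>p. gg (fst p) (snd p))"
  unfolding gg_def mix_def by (intro continuous_intros cKc)
lemma cKcv: "continuous_on KK (\<lambda>p. cv (fst p) (snd p))"
  unfolding cv_def mix_def by (intro continuous_intros cKc)

lemma cKFt: "continuous_on KK (\<lambda>(s, x). Ft s x)"
proof -
  have nz: "\<forall>q\<in>KK. mu (fst q) (snd q) \<noteq> 0" using mupos by (auto simp: less_imp_neq[symmetric])
  have nz2: "\<forall>q\<in>KK. (mu (fst q) (snd q))\<^sup>2 \<noteq> 0" using nz by simp
  have "continuous_on KK (\<lambda>q. Ft (fst q) (snd q))"
    unfolding Ft_def sgt_def pt_def sg_def p_def
    apply (intro continuous_on_diff continuous_on_add continuous_on_mult continuous_on_divide continuous_on_power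
       continuous_on_const cKc cKr cKh cKu1 cKct cKrt cKht cKu1t cKmu cKgg nz nz2)
    done
  then show ?thesis by (simp add: split_beta)
qed

lemma cKSnt: "continuous_on KK (\<lambda>(s, x). Snt s x)"
proof -
  have nz: "\<forall>q\<in>KK. \<rho> (fst q) (snd q) \<noteq> 0" "\<forall>q\<in>KK. \<theta> (fst q) (snd q) \<noteq> 0"
    using rpos hpos by (auto simp: less_imp_neq[symmetric])
  have "continuous_on KK (\<lambda>q. Snt (fst q) (snd q))"
    unfolding Snt_def en_def
    apply (intro continuous_on_diff continuous_on_add continuous_on_mult continuous_on_divide continuous_on_ln
       continuous_on_const cKc cKr cKh cKct cKrt cKht cKcv cKgg nz)
    done
  then show ?thesis by (simp add: split_beta)
qed

lemma sc: "(\<And>x. ((\<lambda>y. f y) has_real_derivative f' x) (at x)) \<Longrightarrow> continuous_on S f"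
  by (rule DERIV_continuous_on) (rule has_field_derivative_at_within, blast)

lemma scc: "t \<in> {0..T} \<Longrightarrow> continuous_on S (\<lambda>x. c t x)" by (rule sc, rule DXc)
lemma scr: "t \<in> {0..T} \<Longrightarrow> continuous_on S (\<lambda>x. \<rho> t x)" by (rule sc, rule DXr)
lemma sch: "t \<in> {0..T} \<Longrightarrow> continuous_on S (\<lambda>x. \<theta> t x)" by (rule sc, rule DXh)
lemma scu: "t \<in> {0..T} \<Longrightarrow> continuous_on S (\<lambda>x. u t x)" by (rule sc, rule DXu)
lemma scu1: "t \<in> {0..T} \<Longrightarrow> continuous_on S (\<lambda>x. pdx u t x)" by (rule sc, rule DXu1)
lemma scmu: "t \<in> {0..T} \<Longrightarrow> continuous_on S (\<lambda>x. mu t x)" by (rule sc, rule DXmu)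
lemma scgg: "t \<in> {0..T} \<Longrightarrow> continuous_on S (\<lambda>x. gg t x)" by (rule sc, rule DXgg)
lemma sccv: "t \<in> {0..T} \<Longrightarrow> continuous_on S (\<lambda>x. cv t x)" by (rule sc, rule DXcv)
lemma scsg: "t \<in> {0..T} \<Longrightarrow> continuous_on S (\<lambda>x. sg t x)" by (rule sc, rule DXsg)
lemma scsgx: "t \<in> {0..T} \<Longrightarrow> continuous_on S (\<lambda>x. sgx t x)" by (rule sc, rule DXsgx)
lemma scp: "t \<in> {0..T} \<Longrightarrow> continuous_on S (\<lambda>x. p t x)" by (rule sc, rule DXp)

lemmas scall = scc scr sch scu scu1 scmu scgg sccv scsg scsgx scp

lemma scF: "t \<in> {0..T} \<Longrightarrow> continuous_on S (\<lambda>x. F t x)"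
  unfolding F_def by (intro continuous_intros scall) (auto simp: less_imp_neq[symmetric] mupos)
lemma scQ: "t \<in> {0..T} \<Longrightarrow> continuous_on S (\<lambda>x. Q t x)"
  unfolding Q_def by (intro continuous_intros scall)
    (auto simp: less_imp_neq[symmetric] mupos rpos cvpos)
lemma scSn: "t \<in> {0..T} \<Longrightarrow> continuous_on S (\<lambda>x. Sn t x)"
  unfolding Sn_def en_def by (intro continuous_intros scall) (auto simp: less_imp_neq[symmetric] rpos hpos)
lemma scSd: "t \<in> {0..T} \<Longrightarrow> continuous_on S (\<lambda>x. mu t x * (pdx u t x)\<^sup>2 / \<theta> t x)"
  by (intro continuous_intros scall) (auto simp: less_imp_neq[symmetric] hpos)

end

context nsl begin

lemma perA: "f \<in> {c, \<rho>, \<theta>, u} \<Longrightarrow> pdi bs f t (x + 1) = pdi bs f t x"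
  by (rule pdi_periodic) (use per in auto)
lemma per1: "f \<in> {c, \<rho>, \<theta>, u} \<Longrightarrow> pdi bs f t 1 = pdi bs f t 0"
  using perA[of f bs t 0] by simp

lemma pc0: "c t 1 = c t 0" using per1[where f=c and bs="[]"] by simp
lemma pr0: "\<rho> t 1 = \<rho> t 0" using per1[where f=\<rho> and bs="[]"] by simp
lemma ph0: "\<theta> t 1 = \<theta> t 0" using per1[where f=\<theta> and bs="[]"] by simp
lemma pu0: "u t 1 = u t 0" using per1[where f=u and bs="[]"] by simp
lemma pc1: "pdx c t 1 = pdx c t 0" using per1[where f=c and bs="[False]"] by simp
lemma pr1: "pdx \<rho> t 1 = pdx \<rho> t 0" using per1[where f=\<rho> and bs="[False]"] by simp
lemma ph1: "pdx \<theta> t 1 = pdx \<theta> t 0" using per1[where f=\<theta> and bs="[False]"] by simp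
lemma pu1: "pdx u t 1 = pdx u t 0" using per1[where f=u and bs="[False]"] by simp
lemma pu2: "pdx (pdx u) t 1 = pdx (pdx u) t 0" using per1[where f=u and bs="[False,False]"] by simp

lemmas pers = pc0 pr0 ph0 pu0 pc1 pr1 ph1 pu1 pu2

lemma Gper: "G t 1 = G t 0"
  unfolding G_def sg_def sgx_def px_def p_def mu_def gg_def by (simp only: pers)
lemma Hper: "Hn t 1 = Hn t 0"
  unfolding Hn_def en_def cv_def gg_def by (simp only: pers)

lemma intQ: assumes t: "t \<in> {0..T}"
  shows "integral {0..1} (\<lambda>x. Ft t x) = Yd t"
proof -
  have g: "((\<lambda>x. Gx t x) has_integral (G t 1 - G t 0)) {0..1}"
    by (rule fundamental_theorem_of_calculus)
       (auto intro!: has_field_derivative_at_within DXG t simp: has_real_derivative_iff_has_vector_derivative[symmetric])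
  have q: "((\<lambda>x. Q t x) has_integral Yd t) {0..1}"
    unfolding Yd_def by (rule integrable_integral, rule integrable_continuous_interval, rule scQ[OF t])
  have "((\<lambda>x. Q t x + Gx t x) has_integral (Yd t + (G t 1 - G t 0))) {0..1}"
    by (rule has_integral_add[OF q g])
  then have "((\<lambda>x. Ft t x) has_integral Yd t) {0..1}"
    using FtQ[OF t] Gper[of t] by simp
  then show ?thesis by (rule integral_unique)
qed

lemma intS: assumes t: "t \<in> {0..T}"
  shows "integral {0..1} (\<lambda>x. Snt t x) = Sd t"
proof -
  have g: "((\<lambda>x. Hnx t x) has_integral (Hn t 1 - Hn t 0)) {0..1}"
    by (rule fundamental_theorem_of_calculus)
       (auto intro!: has_field_derivative_at_within DXHn t simp: has_real_derivative_iff_has_vector_derivative[symmetric])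
  have q: "((\<lambda>x. mu t x * (pdx u t x)\<^sup>2 / \<theta> t x) has_integral Sd t) {0..1}"
    unfolding Sd_def by (rule integrable_integral, rule integrable_continuous_interval, rule scSd[OF t])
  have "((\<lambda>x. mu t x * (pdx u t x)\<^sup>2 / \<theta> t x - Hnx t x) has_integral (Sd t - (Hn t 1 - Hn t 0))) {0..1}"
    by (rule has_integral_diff[OF q g])
  then have "((\<lambda>x. Snt t x) has_integral Sd t) {0..1}"
    using SntQ[OF t] Hper[of t] by simp
  then show ?thesis by (rule integral_unique)
qed

lemma DY: assumes t: "t \<in> {0..T}"
  shows "(Y has_real_derivative Yd t) (at t within {0..T})"
proof -
  have "((\<lambda>s. integral (cbox 0 1) (\<lambda>x. F s x)) has_field_derivative integral (cbox 0 1) (\<lambda>x. Ft t x)) (at t within {0..T})"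
  proof (rule leibniz_rule_field_derivative)
    fix s x assume s: "s \<in> {0..T}"
    show "((\<lambda>s. F s x) has_field_derivative Ft s x) (at s within {0..T})"
      by (rule has_field_derivative_at_within[OF DTF[OF s]])
  next
    fix s assume s: "s \<in> {0..T}"
    show "(\<lambda>x. F s x) integrable_on cbox 0 1"
      by (rule integrable_continuous, rule scF[OF s])
  next
    show "continuous_on ({0..T} \<times> cbox 0 1) (\<lambda>(s, x). Ft s x)" using cKFt by simp
  qed (use t in auto)
  then show ?thesis unfolding Y_def using intQ[OF t] by simp
qed

lemma DS: assumes t: "t \<in> {0..T}"
  shows "(Sf has_real_derivative Sd t) (at t within {0..T})"
proof -
  have "((\<lambda>s. integral (cbox 0 1) (\<lambda>x. Sn s x)) has_field_derivative integral (cbox 0 1) (\<lambda>x. Snt t x)) (at t within {0..T})"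
  proof (rule leibniz_rule_field_derivative)
    fix s x assume s: "s \<in> {0..T}"
    show "((\<lambda>s. Sn s x) has_field_derivative Snt s x) (at s within {0..T})"
      by (rule has_field_derivative_at_within[OF DTSn[OF s]])
  next
    fix s assume s: "s \<in> {0..T}"
    show "(\<lambda>x. Sn s x) integrable_on cbox 0 1"
      by (rule integrable_continuous, rule scSn[OF s])
  next
    show "continuous_on ({0..T} \<times> cbox 0 1) (\<lambda>(s, x). Snt s x)" using cKSnt by simp
  qed (use t in auto)
  then show ?thesis unfolding Sf_def using intS[OF t] by simp
qed

end


definition "kP gp gm ru tu = (max gp gm - 1) * ru * tu"
definition "kK1 mp mm gp gm cp cm = (1 + 2 * (max gp gm - 1) / min cp cm) / (min mp mm)\<^sup>2"
definition "kB mp mm gp gm cp cm ru = ru * (kK1 mp mm gp gm cp cm)\<^sup>2 / 2"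
definition "kal mp mm tu = 2 * (max mp mm)\<^sup>2 * tu / min mp mm"
definition "kbe gp gm ru tu = 2 * (kP gp gm ru tu)\<^sup>2"

lemma intle: fixes f g :: "real \<Rightarrow> real" shows "continuous_on {0..1} f \<Longrightarrow> continuous_on {0..1} g \<Longrightarrow> (\<And>x. x \<in> {0..1::real} \<Longrightarrow> f x \<le> g x)
   \<Longrightarrow> integral {0..1} f \<le> integral {0..1} g"
  by (rule integral_le) (auto intro: integrable_continuous_interval)

lemma intnn: fixes f :: "real \<Rightarrow> real" shows "continuous_on {0..1} f \<Longrightarrow> (\<And>x. x \<in> {0..1::real} \<Longrightarrow> 0 \<le> f x) \<Longrightarrow> 0 \<le> integral {0..1} f"
  by (rule integral_nonneg) (auto intro: integrable_continuous_interval)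

lemma negcube: "- (s ^ 3) \<le> \<bar>s::real\<bar> ^ 3"
proof (cases "0 \<le> s")
  case True
  then have "0 \<le> s ^ 3" by simp
  then show ?thesis using True by simp
next
  case False
  then have "\<bar>s\<bar> = - s" by simp
  then show ?thesis by (simp add: power3_eq_cube)
qed

context nsl begin

abbreviation "Pk \<equiv> kP gp gm ru tu"
abbreviation "K1k \<equiv> kK1 mp mm gp gm cp cm"
abbreviation "Bk \<equiv> kB mp mm gp gm cp cm ru"
abbreviation "alk \<equiv> kal mp mm tu"
abbreviation "bek \<equiv> kbe gp gm ru tu"
abbreviation "mmin \<equiv> min mp mm"
abbreviation "mmax \<equiv> max mp mm"

lemma mmin_pos: "mmin > 0" using pos by simp

lemma pbnd: assumes t: "t \<in> {0..T}" shows "0 < p t x \<and> p t x \<le> Pk"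
proof -
  have "gg t x * \<rho> t x * \<theta> t x \<le> (max gp gm - 1) * ru * tu"
    using ggb[OF t, of x] rb[OF t, of x] hb[OF t, of x] ggpos[OF t, of x] rpos[OF t, of x] hpos[OF t, of x]
    by (intro mult_mono) (auto intro: mult_nonneg_nonneg)
  then show ?thesis using ggpos[OF t, of x] rpos[OF t, of x] hpos[OF t, of x]
    by (simp add: p_def kP_def)
qed

lemma u1eq: assumes t: "t \<in> {0..T}" shows "pdx u t x = (sg t x + p t x) / mu t x"
  using mupos[OF t, of x] by (simp add: sg_def field_simps)

lemma Qle: assumes t: "t \<in> {0..T}"
  shows "Q t x \<le> - (2 / ru) * (sgx t x)\<^sup>2 + K1k * \<bar>sg t x\<bar> ^ 3"
proof -
  define k where "k = 1 + 2 * gg t x / cv t x"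
  have mu: "mu t x > 0" "mmin \<le> mu t x" using mupos[OF t, of x] mub[OF t, of x] by auto
  have kpos: "k \<ge> 0" using ggpos[OF t, of x] cvpos[OF t, of x] by (simp add: k_def)
  have kle: "k \<le> 1 + 2 * (max gp gm - 1) / min cp cm"
  proof -
    have "gg t x / cv t x \<le> (max gp gm - 1) / min cp cm"
      using ggb[OF t, of x] cvb[OF t, of x] ggpos[OF t, of x] cvpos[OF t, of x] pos
      by (intro frac_le) auto
    moreover have "2 * gg t x / cv t x = 2 * (gg t x / cv t x)"
      "2 * (max gp gm - 1) / min cp cm = 2 * ((max gp gm - 1) / min cp cm)" by simp_all
    ultimately show ?thesis unfolding k_def by linarith
  qed
  have t2: "(1 - 2 * (1 + gg t x / cv t x)) * (sg t x)\<^sup>2 * pdx u t x / mu t x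
        = - k * ((sg t x) ^ 3 + (sg t x)\<^sup>2 * p t x) / (mu t x)\<^sup>2"
    unfolding u1eq[OF t] k_def using mu cvpos[OF t, of x]
    by (simp add: field_simps power2_eq_square power3_eq_cube)
  have "- k * ((sg t x) ^ 3 + (sg t x)\<^sup>2 * p t x) \<le> k * \<bar>sg t x\<bar> ^ 3"
  proof -
    have "- ((sg t x) ^ 3) \<le> \<bar>sg t x\<bar> ^ 3"
      by (rule negcube)
    moreover have "0 \<le> (sg t x)\<^sup>2 * p t x" using pbnd[OF t, of x] by simp
    ultimately have "- ((sg t x) ^ 3 + (sg t x)\<^sup>2 * p t x) \<le> \<bar>sg t x\<bar> ^ 3" by linarith
    then have "k * (- ((sg t x) ^ 3 + (sg t x)\<^sup>2 * p t x)) \<le> k * \<bar>sg t x\<bar> ^ 3"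
      by (rule mult_left_mono[OF _ kpos])
    then show ?thesis by (simp add: algebra_simps)
  qed
  then have "- k * ((sg t x) ^ 3 + (sg t x)\<^sup>2 * p t x) / (mu t x)\<^sup>2 \<le> k * \<bar>sg t x\<bar> ^ 3 / (mu t x)\<^sup>2"
    using mu by (intro divide_right_mono) auto
  also have "\<dots> = (k / (mu t x)\<^sup>2) * \<bar>sg t x\<bar> ^ 3" by simp
  also have "\<dots> \<le> K1k * \<bar>sg t x\<bar> ^ 3"
  proof (rule mult_right_mono)
    have "(mmin)\<^sup>2 \<le> (mu t x)\<^sup>2" using mu mmin_pos by (intro power_mono) auto
    then show "k / (mu t x)\<^sup>2 \<le> K1k" unfolding kK1_def
      using kle kpos mmin_pos by (intro frac_le) auto
  qed simp
  finally have s2: "(1 - 2 * (1 + gg t x / cv t x)) * (sg t x)\<^sup>2 * pdx u t x / mu t x \<le> K1k * \<bar>sg t x\<bar> ^ 3"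
    using t2 by simp
  have s1: "- 2 * (sgx t x)\<^sup>2 / \<rho> t x \<le> - (2 / ru) * (sgx t x)\<^sup>2"
  proof -
    have "2 * (sgx t x)\<^sup>2 / ru \<le> 2 * (sgx t x)\<^sup>2 / \<rho> t x"
      using rb[OF t, of x] rpos[OF t, of x] by (intro divide_left_mono) auto
    then show ?thesis by simp
  qed
  show ?thesis using s1 s2 unfolding Q_def by linarith
qed

end

context nsl begin

lemma Znn: "t \<in> {0..T} \<Longrightarrow> 0 \<le> Z t"
  unfolding Z_def by (rule intnn) (intro continuous_intros scall, auto)
lemma Wnn: "t \<in> {0..T} \<Longrightarrow> 0 \<le> W t"
  unfolding W_def by (rule intnn) (intro continuous_intros scall, auto)
lemma Ynn: "t \<in> {0..T} \<Longrightarrow> 0 \<le> Y t"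
  unfolding Y_def F_def by (rule intnn) (use scF[unfolded F_def] mupos in \<open>auto simp: less_imp_le\<close>)
lemma Sdnn: "t \<in> {0..T} \<Longrightarrow> 0 \<le> Sd t"
  unfolding Sd_def by (rule intnn) (use scSd mupos hpos in \<open>auto simp: less_imp_le\<close>)

lemma sgsob: assumes t: "t \<in> {0..T}" and x: "x \<in> {0..1}"
  shows "(sg t x)\<^sup>2 \<le> 2 * Z t + W t"
  unfolding Z_def W_def by (rule sob[OF DXsg[OF t] scsgx[OF t] x])

lemma ZY: assumes t: "t \<in> {0..T}" shows "Z t \<le> mmax * Y t"
proof -
  have "Z t \<le> integral {0..1} (\<lambda>x. mmax * F t x)"
    unfolding Z_def
  proof (rule intle)
    show "continuous_on {0..1} (\<lambda>x. (sg t x)\<^sup>2)" by (intro continuous_intros scall t)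
    show "continuous_on {0..1} (\<lambda>x. mmax * F t x)" by (intro continuous_intros scF t)
    fix x
    have "(sg t x)\<^sup>2 = mu t x * F t x" using mupos[OF t, of x] by (simp add: F_def)
    also have "\<dots> \<le> mmax * F t x"
      using mub[OF t, of x] mupos[OF t, of x] by (intro mult_right_mono) (auto simp: F_def)
    finally show "(sg t x)\<^sup>2 \<le> mmax * F t x" .
  qed
  then show ?thesis by (simp add: Y_def)
qed

lemma ZS: assumes t: "t \<in> {0..T}" shows "Z t \<le> alk * Sd t + bek"
proof -
  have "Z t \<le> integral {0..1} (\<lambda>x. alk * (mu t x * (pdx u t x)\<^sup>2 / \<theta> t x) + bek)"
    unfolding Z_def
  proof (rule intle)
    show "continuous_on {0..1} (\<lambda>x. (sg t x)\<^sup>2)" by (intro continuous_intros scall t)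
    show "continuous_on {0..1} (\<lambda>x. alk * (mu t x * (pdx u t x)\<^sup>2 / \<theta> t x) + bek)"
      by (intro continuous_intros scSd t)
    fix x
    have mu: "mmin \<le> mu t x" "mu t x \<le> mmax" "0 < mu t x" using mub[OF t, of x] mupos[OF t, of x] by auto
    have h: "0 < \<theta> t x" "\<theta> t x \<le> tu" using hb[OF t, of x] hpos[OF t, of x] by auto
    have P: "0 < p t x" "p t x \<le> Pk" using pbnd[OF t, of x] by auto
    have "(sg t x)\<^sup>2 \<le> 2 * (mu t x)\<^sup>2 * (pdx u t x)\<^sup>2 + 2 * (p t x)\<^sup>2"
    proof -
      have "0 \<le> (mu t x * pdx u t x + p t x)\<^sup>2" by simp
      then show ?thesis unfolding sg_def by (simp add: power2_eq_square algebra_simps)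
    qed
    also have "\<dots> \<le> 2 * mmax\<^sup>2 * (pdx u t x)\<^sup>2 + 2 * Pk\<^sup>2"
    proof -
      have "(mu t x)\<^sup>2 \<le> mmax\<^sup>2" using mu by (intro power_mono) auto
      then have "(mu t x)\<^sup>2 * (pdx u t x)\<^sup>2 \<le> mmax\<^sup>2 * (pdx u t x)\<^sup>2" by (intro mult_right_mono) auto
      moreover have "(p t x)\<^sup>2 \<le> Pk\<^sup>2" using P by (intro power_mono) auto
      ultimately show ?thesis by simp
    qed
    also have "\<dots> \<le> alk * (mu t x * (pdx u t x)\<^sup>2 / \<theta> t x) + bek"
    proof -
      have "mmin * (pdx u t x)\<^sup>2 / tu \<le> mu t x * (pdx u t x)\<^sup>2 / \<theta> t x"
        using mu h pos by (intro frac_le mult_right_mono mult_nonneg_nonneg) auto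
      then have "(pdx u t x)\<^sup>2 \<le> (tu / mmin) * (mu t x * (pdx u t x)\<^sup>2 / \<theta> t x)"
        using mmin_pos pos h by (simp add: field_simps)
      then have "2 * mmax\<^sup>2 * (pdx u t x)\<^sup>2 \<le> 2 * mmax\<^sup>2 * ((tu / mmin) * (mu t x * (pdx u t x)\<^sup>2 / \<theta> t x))"
        by (intro mult_left_mono) auto
      then show ?thesis by (simp add: kal_def kbe_def)
    qed
    finally show "(sg t x)\<^sup>2 \<le> alk * (mu t x * (pdx u t x)\<^sup>2 / \<theta> t x) + bek" .
  qed
  also have "\<dots> = alk * Sd t + bek"
  proof -
    have i1: "(\<lambda>x. alk * (mu t x * (pdx u t x)\<^sup>2 / \<theta> t x)) integrable_on {0..1}"
      by (rule integrable_continuous_interval, rule continuous_on_mult[OF continuous_on_const scSd[OF t]])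
    have "integral {0..1} (\<lambda>x. alk * (mu t x * (pdx u t x)\<^sup>2 / \<theta> t x) + bek)
        = integral {0..1} (\<lambda>x. alk * (mu t x * (pdx u t x)\<^sup>2 / \<theta> t x)) + integral {0..1::real} (\<lambda>x. bek)"
      by (rule integral_add[OF i1 integrable_const_ivl])
    then show ?thesis unfolding integral_mult_right integral_const_real by (simp add: Sd_def)
  qed
  finally show ?thesis .
qed

end

context nsl begin

lemma K1pos: "K1k \<ge> 0" unfolding kK1_def using pos by (auto intro!: divide_nonneg_pos)

lemma IYraw: assumes t: "t \<in> {0..T}"
  shows "Yd t \<le> - (1/ru) * W t + (1/ru) * Z t + Bk * (Z t)\<^sup>2"
proof -
  define M where "M = sqrt (2 * Z t + W t)"
  have ZW: "0 \<le> Z t" "0 \<le> W t" using Znn[OF t] Wnn[OF t] by auto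
  have "0 \<le> 2 * Z t + W t" using ZW by linarith
  then have M2: "M\<^sup>2 = 2 * Z t + W t" unfolding M_def by (rule real_sqrt_pow2)
  have Mnn: "M \<ge> 0" unfolding M_def by (rule real_sqrt_ge_zero) (use ZW in linarith)
  have sgM: "\<bar>sg t x\<bar> \<le> M" if x: "x \<in> {0..1}" for x
  proof -
    have "sqrt ((sg t x)\<^sup>2) \<le> M" unfolding M_def by (rule real_sqrt_le_mono[OF sgsob[OF t x]])
    then show ?thesis by simp
  qed
  have i1: "(\<lambda>x. - (2 / ru) * (sgx t x)\<^sup>2) integrable_on {0..1}"
    by (intro integrable_continuous_interval continuous_intros scall t)
  have i2: "(\<lambda>x. K1k * M * (sg t x)\<^sup>2) integrable_on {0..1}"
    by (intro integrable_continuous_interval continuous_intros scall t)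
  have "Yd t \<le> integral {0..1} (\<lambda>x. - (2 / ru) * (sgx t x)\<^sup>2 + K1k * M * (sg t x)\<^sup>2)"
    unfolding Yd_def
  proof (rule intle)
    show "continuous_on {0..1} (Q t)" using scQ[OF t] by simp
    show "continuous_on {0..1} (\<lambda>x. - (2 / ru) * (sgx t x)\<^sup>2 + K1k * M * (sg t x)\<^sup>2)"
      by (intro continuous_intros scall t)
    fix x :: real assume x: "x \<in> {0..1}"
    have "\<bar>sg t x\<bar> ^ 3 = \<bar>sg t x\<bar> * (sg t x)\<^sup>2" by (simp add: power3_eq_cube power2_eq_square abs_mult)
    also have "\<dots> \<le> M * (sg t x)\<^sup>2" by (rule mult_right_mono[OF sgM[OF x]]) simp
    finally have "K1k * \<bar>sg t x\<bar> ^ 3 \<le> K1k * (M * (sg t x)\<^sup>2)" by (rule mult_left_mono[OF _ K1pos])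
    then show "Q t x \<le> - (2 / ru) * (sgx t x)\<^sup>2 + K1k * M * (sg t x)\<^sup>2"
      using Qle[OF t, of x] by (simp add: mult.assoc)
  qed
  also have "\<dots> = - (2 / ru) * W t + K1k * M * Z t"
    unfolding integral_add[OF i1 i2] integral_mult_right W_def Z_def ..
  also have "\<dots> \<le> - (1/ru) * W t + (1/ru) * Z t + Bk * (Z t)\<^sup>2"
  proof -
    have "0 \<le> (M - ru * K1k * Z t)\<^sup>2" by simp
    then have "2 * ru * K1k * M * Z t \<le> M\<^sup>2 + ru\<^sup>2 * K1k\<^sup>2 * (Z t)\<^sup>2"
      by (simp add: power2_eq_square algebra_simps)
    then have a: "2 * ru * (K1k * M * Z t) \<le> 2 * Z t + W t + 2 * ru * (Bk * (Z t)\<^sup>2)"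
      unfolding M2 kB_def by (simp add: power2_eq_square algebra_simps)
    have "K1k * M * Z t \<le> (2 * Z t + W t) / (2 * ru) + Bk * (Z t)\<^sup>2"
    proof -
      have "K1k * M * Z t = (2 * ru * (K1k * M * Z t)) / (2 * ru)" using pos by simp
      also have "\<dots> \<le> (2 * Z t + W t + 2 * ru * (Bk * (Z t)\<^sup>2)) / (2 * ru)"
        using a pos by (intro divide_right_mono) auto
      also have "\<dots> = (2 * Z t + W t) / (2 * ru) + Bk * (Z t)\<^sup>2" using pos by (simp add: field_simps)
      finally show ?thesis .
    qed
    moreover have "(2 * Z t + W t) / (2 * ru) = (1/ru) * Z t + (1/(2*ru)) * W t" using pos by (simp add: field_simps)
    moreover have "(1/(2*ru)) * W t - (2 / ru) * W t \<le> - (1/ru) * W t"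
    proof -
      have "(1/(2*ru)) * W t - (2 / ru) * W t = - (3/(2*ru)) * W t" using pos by (simp add: field_simps)
      also have "\<dots> \<le> - (1/ru) * W t" using ZW pos by (intro mult_right_mono) (auto simp: field_simps)
      finally show ?thesis .
    qed
    ultimately show ?thesis by linarith
  qed
  finally show ?thesis .
qed

end

context nsl begin

lemma Bpos: "Bk \<ge> 0" unfolding kB_def using pos by simp
lemma alpos: "alk \<ge> 0" unfolding kal_def using pos by simp
lemma bepos: "bek \<ge> 0" unfolding kbe_def by simp

lemma IY: assumes t: "t \<in> {0..T}"
  shows "Yd t \<le> - (1/ru) * W t + (mmax * (1/ru + Bk * bek) + mmax * Bk * alk * Sd t) * Y t"
proof -
  have Z: "0 \<le> Z t" "Z t \<le> alk * Sd t + bek" "Z t \<le> mmax * Y t" using Znn[OF t] ZS[OF t] ZY[OF t] by auto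
  have f: "0 \<le> 1/ru + Bk * (alk * Sd t + bek)"
    using Bpos alpos bepos Sdnn[OF t] pos by (intro add_nonneg_nonneg mult_nonneg_nonneg) auto
  have "(1/ru) * Z t + Bk * (Z t)\<^sup>2 = Z t * (1/ru + Bk * Z t)" by (simp add: power2_eq_square algebra_simps)
  also have "\<dots> \<le> Z t * (1/ru + Bk * (alk * Sd t + bek))"
    using Z Bpos by (intro mult_left_mono add_left_mono) auto
  also have "\<dots> \<le> (mmax * Y t) * (1/ru + Bk * (alk * Sd t + bek))"
    using Z f by (intro mult_right_mono) auto
  also have "\<dots> = (mmax * (1/ru + Bk * bek) + mmax * Bk * alk * Sd t) * Y t" by (simp add: algebra_simps)
  finally show ?thesis using IYraw[OF t] by linarith
qed

abbreviation "Smk \<equiv> ru * (max cp cm * (\<bar>ln tl\<bar> + \<bar>ln tu\<bar>) + (max gp gm - 1) * (\<bar>ln rl\<bar> + \<bar>ln ru\<bar>))"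

lemma lnb: "0 < (a::real) \<Longrightarrow> a \<le> z \<Longrightarrow> z \<le> b \<Longrightarrow> \<bar>ln z\<bar> \<le> \<bar>ln a\<bar> + \<bar>ln b\<bar>"
proof -
  assume a: "0 < a" "a \<le> z" "z \<le> b"
  have z: "0 < z" "0 < b" using a by auto
  have "ln a \<le> ln z" using a z by simp
  moreover have "ln z \<le> ln b" using a z by simp
  ultimately show ?thesis by linarith
qed

lemma Snb: assumes t: "t \<in> {0..T}" shows "\<bar>Sn t x\<bar> \<le> Smk"
proof -
  have l1: "\<bar>ln (\<theta> t x)\<bar> \<le> \<bar>ln tl\<bar> + \<bar>ln tu\<bar>" using hb[OF t, of x] pos by (intro lnb) auto
  have l2: "\<bar>ln (\<rho> t x)\<bar> \<le> \<bar>ln rl\<bar> + \<bar>ln ru\<bar>" using rb[OF t, of x] pos by (intro lnb) auto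
  have "\<bar>en t x\<bar> \<le> \<bar>cv t x\<bar> * \<bar>ln (\<theta> t x)\<bar> + \<bar>gg t x\<bar> * \<bar>ln (\<rho> t x)\<bar>"
    unfolding en_def by (metis abs_mult abs_triangle_ineq4)
  also have "\<dots> \<le> max cp cm * (\<bar>ln tl\<bar> + \<bar>ln tu\<bar>) + (max gp gm - 1) * (\<bar>ln rl\<bar> + \<bar>ln ru\<bar>)"
    using cvb[OF t, of x] cvpos[OF t, of x] ggb[OF t, of x] ggpos[OF t, of x] l1 l2
    by (intro add_mono mult_mono) auto
  finally have e: "\<bar>en t x\<bar> \<le> max cp cm * (\<bar>ln tl\<bar> + \<bar>ln tu\<bar>) + (max gp gm - 1) * (\<bar>ln rl\<bar> + \<bar>ln ru\<bar>)" .
  have "\<bar>Sn t x\<bar> = \<rho> t x * \<bar>en t x\<bar>" using rpos[OF t, of x] by (simp add: Sn_def abs_mult)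
  also have "\<dots> \<le> Smk" using rb[OF t, of x] rpos[OF t, of x] e by (intro mult_mono) auto
  finally show ?thesis .
qed

lemma Sb: assumes t: "t \<in> {0..T}" shows "\<bar>Sf t\<bar> \<le> Smk"
proof -
  have "norm (integral {0..1} (\<lambda>x. Sn t x)) \<le> integral {0..1::real} (\<lambda>x. Smk)"
    by (rule integral_norm_bound_integral)
       (auto intro: integrable_continuous_interval scSn[OF t] Snb[OF t])
  then show ?thesis by (simp add: Sf_def)
qed

lemma Y0b: "Y 0 \<le> max (integral {0..1} (\<lambda>x. (stress mp mm gp gm c \<rho> \<theta> u 0 x)\<^sup>2)) 0 / mmin"
proof -
  have t: "(0::real) \<in> {0..T}" using pos by auto
  have "Y 0 \<le> integral {0..1} (\<lambda>x. (sg 0 x)\<^sup>2 / mmin)"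
    unfolding Y_def
  proof (rule intle)
    show "continuous_on {0..1} (F 0)" using scF[OF t] by simp
    show "continuous_on {0..1} (\<lambda>x. (sg 0 x)\<^sup>2 / mmin)" by (intro continuous_intros scall t) (use mmin_pos in auto)
    fix x
    show "F 0 x \<le> (sg 0 x)\<^sup>2 / mmin" unfolding F_def
      using mub[OF t, of x] mmin_pos by (intro divide_left_mono) auto
  qed
  also have "\<dots> = integral {0..1} (\<lambda>x. (stress mp mm gp gm c \<rho> \<theta> u 0 x)\<^sup>2) / mmin"
    by (simp add: stress_sg)
  also have "\<dots> \<le> max (integral {0..1} (\<lambda>x. (stress mp mm gp gm c \<rho> \<theta> u 0 x)\<^sup>2)) 0 / mmin"
    using mmin_pos by (intro divide_right_mono) auto
  finally show ?thesis .
qed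

lemma u1b: assumes t: "t \<in> {0..T}" shows "\<bar>pdx u t x\<bar> \<le> (\<bar>sg t x\<bar> + Pk) / mmin"
proof -
  have "\<bar>pdx u t x\<bar> = \<bar>sg t x + p t x\<bar> / mu t x" using mupos[OF t, of x] by (simp add: u1eq[OF t])
  also have "\<dots> \<le> (\<bar>sg t x\<bar> + Pk) / mmin"
    using pbnd[OF t, of x] mub[OF t, of x] mmin_pos
    by (intro frac_le) (auto intro: order_trans[OF abs_triangle_ineq])
  finally show ?thesis .
qed

lemma C8b: assumes t: "t \<in> {0..T}"
  shows "integral {0..1} (\<lambda>x. (pdx u t x)\<^sup>2) \<le> 2 * (mmax * Y t + Pk\<^sup>2) / mmin\<^sup>2"
proof -
  have "integral {0..1} (\<lambda>x. (pdx u t x)\<^sup>2) \<le> integral {0..1} (\<lambda>x. (2 / mmin\<^sup>2) * (sg t x)\<^sup>2 + 2 * Pk\<^sup>2 / mmin\<^sup>2)"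
  proof (rule intle)
    show "continuous_on {0..1} (\<lambda>x. (pdx u t x)\<^sup>2)" by (intro continuous_intros scall t)
    show "continuous_on {0..1} (\<lambda>x. (2 / mmin\<^sup>2) * (sg t x)\<^sup>2 + 2 * Pk\<^sup>2 / mmin\<^sup>2)" by (intro continuous_intros scall t)
    fix x
    have "(pdx u t x)\<^sup>2 = \<bar>pdx u t x\<bar>\<^sup>2" by simp
    also have "\<dots> \<le> ((\<bar>sg t x\<bar> + Pk) / mmin)\<^sup>2" by (rule power_mono[OF u1b[OF t]]) simp
    also have "\<dots> = (\<bar>sg t x\<bar> + Pk)\<^sup>2 / mmin\<^sup>2" by (simp add: power_divide)
    also have "\<dots> \<le> (2 * (sg t x)\<^sup>2 + 2 * Pk\<^sup>2) / mmin\<^sup>2"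
    proof (rule divide_right_mono)
      have "0 \<le> (\<bar>sg t x\<bar> - Pk)\<^sup>2" by simp
      then show "(\<bar>sg t x\<bar> + Pk)\<^sup>2 \<le> 2 * (sg t x)\<^sup>2 + 2 * Pk\<^sup>2"
        by (simp add: power2_eq_square algebra_simps)
    qed simp
    also have "\<dots> = (2 / mmin\<^sup>2) * (sg t x)\<^sup>2 + 2 * Pk\<^sup>2 / mmin\<^sup>2" by (simp add: add_divide_distrib)
    finally show "(pdx u t x)\<^sup>2 \<le> (2 / mmin\<^sup>2) * (sg t x)\<^sup>2 + 2 * Pk\<^sup>2 / mmin\<^sup>2" .
  qed
  also have "\<dots> = (2 / mmin\<^sup>2) * Z t + 2 * Pk\<^sup>2 / mmin\<^sup>2"
  proof -
    have i: "(\<lambda>x. (2 / mmin\<^sup>2) * (sg t x)\<^sup>2) integrable_on {0..1}"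
      by (intro integrable_continuous_interval continuous_intros scall t)
    show ?thesis unfolding integral_add[OF i integrable_const_ivl] integral_mult_right Z_def by simp
  qed
  also have "\<dots> \<le> (2 / mmin\<^sup>2) * (mmax * Y t) + 2 * Pk\<^sup>2 / mmin\<^sup>2"
    using ZY[OF t] by (intro add_right_mono mult_left_mono) auto
  also have "\<dots> = 2 * (mmax * Y t + Pk\<^sup>2) / mmin\<^sup>2" by (simp add: add_divide_distrib algebra_simps)
  finally show ?thesis .
qed

lemma hSUPb: assumes t: "t \<in> {0..T}"
  shows "(SUP x\<in>{0..1}. \<bar>pdx u t x\<bar>)\<^sup>2 \<le> (4 * alk / mmin\<^sup>2) * Sd t + (2 / mmin\<^sup>2) * W t + (4 * bek + 2 * Pk\<^sup>2) / mmin\<^sup>2"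
proof -
  define M where "M = sqrt (2 * Z t + W t)"
  have ZW: "0 \<le> Z t" "0 \<le> W t" using Znn[OF t] Wnn[OF t] by auto
  have "0 \<le> 2 * Z t + W t" using ZW by linarith
  then have M2: "M\<^sup>2 = 2 * Z t + W t" unfolding M_def by (rule real_sqrt_pow2)
  have Mnn: "M \<ge> 0" unfolding M_def by (rule real_sqrt_ge_zero) (use ZW in linarith)
  have sgM: "\<bar>sg t x\<bar> \<le> M" if x: "x \<in> {0..1}" for x
  proof -
    have "sqrt ((sg t x)\<^sup>2) \<le> M" unfolding M_def by (rule real_sqrt_le_mono[OF sgsob[OF t x]])
    then show ?thesis by simp
  qed
  have ub: "\<bar>pdx u t x\<bar> \<le> (M + Pk) / mmin" if x: "x \<in> {0..1}" for x
  proof -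
    have "(\<bar>sg t x\<bar> + Pk) / mmin \<le> (M + Pk) / mmin"
      using sgM[OF x] mmin_pos by (intro divide_right_mono) auto
    then show ?thesis using u1b[OF t, of x] by linarith
  qed
  have le: "(SUP x\<in>{0..1}. \<bar>pdx u t x\<bar>) \<le> (M + Pk) / mmin"
    by (rule cSUP_least) (use ub in auto)
  have ge: "0 \<le> (SUP x\<in>{0..1}. \<bar>pdx u t x\<bar>)"
  proof (rule cSUP_upper2[where x=0])
    show "bdd_above ((\<lambda>x. \<bar>pdx u t x\<bar>) ` {0..1})" by (rule bdd_aboveI2[OF ub]) auto
  qed auto
  have "(SUP x\<in>{0..1}. \<bar>pdx u t x\<bar>)\<^sup>2 \<le> ((M + Pk) / mmin)\<^sup>2" by (rule power_mono[OF le ge])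
  also have "\<dots> = (M + Pk)\<^sup>2 / mmin\<^sup>2" by (simp add: power_divide)
  also have "\<dots> \<le> (2 * M\<^sup>2 + 2 * Pk\<^sup>2) / mmin\<^sup>2"
  proof (rule divide_right_mono)
    have "0 \<le> (M - Pk)\<^sup>2" by simp
    then show "(M + Pk)\<^sup>2 \<le> 2 * M\<^sup>2 + 2 * Pk\<^sup>2" by (simp add: power2_eq_square algebra_simps)
  qed simp
  also have "\<dots> \<le> (2 * (2 * (alk * Sd t + bek) + W t) + 2 * Pk\<^sup>2) / mmin\<^sup>2"
    unfolding M2 using ZS[OF t] by (intro divide_right_mono) auto
  also have "\<dots> = (4 * alk / mmin\<^sup>2) * Sd t + (2 / mmin\<^sup>2) * W t + (4 * bek + 2 * Pk\<^sup>2) / mmin\<^sup>2"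
    by (simp add: add_divide_distrib algebra_simps)
  finally show ?thesis .
qed

end


definition "kY0 (mp::real) mm S0 = max S0 0 / min mp mm"
definition "ka1 mp mm gp gm cp cm ru tu = max mp mm * (1/ru + kB mp mm gp gm cp cm ru * kbe gp gm ru tu)"
definition "kb1 mp mm gp gm cp cm ru tu = max mp mm * kB mp mm gp gm cp cm ru * kal mp mm tu"
definition "kSm gp gm cp cm rl0 ru0 (tl0::real) tu0 = ru0 * (max cp cm * (\<bar>ln tl0\<bar> + \<bar>ln tu0\<bar>) + (max gp gm - 1) * (\<bar>ln rl0\<bar> + \<bar>ln ru0\<bar>))"
definition "kYm mp mm gp gm cp cm T rl0 ru tl0 tu S0 = kY0 mp mm S0 *
   exp (ka1 mp mm gp gm cp cm ru tu * T + 2 * kb1 mp mm gp gm cp cm ru tu * kSm gp gm cp cm rl0 ru tl0 tu)"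
definition "kC8 mp mm gp gm cp cm T rl0 ru tl0 tu S0 =
   2 * (max mp mm * kYm mp mm gp gm cp cm T rl0 ru tl0 tu S0 + (kP gp gm ru tu)\<^sup>2) / (min mp mm)\<^sup>2 + 1"
definition "kC9 mp mm gp gm cp cm T rl0 ru tl0 tu S0 =
   (4 * kal mp mm tu / (min mp mm)\<^sup>2 + 2 / (min mp mm)\<^sup>2 * kb1 mp mm gp gm cp cm ru tu * kYm mp mm gp gm cp cm T rl0 ru tl0 tu S0 / (1/ru))
     * (2 * kSm gp gm cp cm rl0 ru tl0 tu)
   + (2 / (min mp mm)\<^sup>2 / (1/ru)) * kY0 mp mm S0
   + ((4 * kbe gp gm ru tu + 2 * (kP gp gm ru tu)\<^sup>2) / (min mp mm)\<^sup>2
      + 2 / (min mp mm)\<^sup>2 * ka1 mp mm gp gm cp cm ru tu * kYm mp mm gp gm cp cm T rl0 ru tl0 tu S0 / (1/ru)) * T + 1"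

lemma kpos:
  fixes mp mm gp gm cp cm T rl ru tl tu S0 :: real
  assumes "mp > 0" "mm > 0" "gp > 1" "gm > 1" "cp > 0" "cm > 0"
    and "T > 0" and "rl > 0" "ru > 0" "tl > 0" "tu > 0"
  shows "kC8 mp mm gp gm cp cm T rl ru tl tu S0 > 0" "kC9 mp mm gp gm cp cm T rl ru tl tu S0 > 0"
proof -
  have m: "min mp mm > 0" "max mp mm > 0" using assms by auto
  have Y0: "kY0 mp mm S0 \<ge> 0" unfolding kY0_def using m by simp
  have B: "kB mp mm gp gm cp cm ru \<ge> 0" unfolding kB_def using assms by simp
  have al: "kal mp mm tu \<ge> 0" unfolding kal_def using assms m by simp
  have be: "kbe gp gm ru tu \<ge> 0" unfolding kbe_def by simp
  have a1: "ka1 mp mm gp gm cp cm ru tu \<ge> 0" unfolding ka1_def using m B be assms by simp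
  have b1: "kb1 mp mm gp gm cp cm ru tu \<ge> 0" unfolding kb1_def using m B al by simp
  have Sm: "kSm gp gm cp cm rl ru tl tu \<ge> 0" unfolding kSm_def using assms by (intro mult_nonneg_nonneg add_nonneg_nonneg) auto
  have Ym: "kYm mp mm gp gm cp cm T rl ru tl tu S0 \<ge> 0" unfolding kYm_def using Y0 by simp
  show "kC8 mp mm gp gm cp cm T rl ru tl tu S0 > 0" unfolding kC8_def
    using m Ym by (intro add_nonneg_pos divide_nonneg_pos mult_nonneg_nonneg add_nonneg_nonneg) auto
  show "kC9 mp mm gp gm cp cm T rl ru tl tu S0 > 0" unfolding kC9_def
    using m Ym Y0 a1 b1 Sm al be assms
    by (intro add_nonneg_pos add_nonneg_nonneg mult_nonneg_nonneg divide_nonneg_pos divide_nonneg_nonneg) auto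
qed

context nsl begin

lemma final:
  assumes S0: "integral {0..1} (\<lambda>x. (stress mp mm gp gm c \<rho> \<theta> u 0 x)\<^sup>2) = S0"
  shows "(\<forall>t\<in>{0..T}. integral {0..1} (\<lambda>x. (pdx u t x)\<^sup>2) \<le> kC8 mp mm gp gm cp cm T rl ru tl tu S0) \<and>
       integral {0..T} (\<lambda>t. (SUP x\<in>{0..1}. \<bar>pdx u t x\<bar>)\<^sup>2) \<le> kC9 mp mm gp gm cp cm T rl ru tl tu S0"
proof -
  have w: "1/ru > 0" using pos by simp
  have a1: "ka1 mp mm gp gm cp cm ru tu \<ge> 0" unfolding ka1_def using Bpos bepos pos by simp
  have b1: "kb1 mp mm gp gm cp cm ru tu \<ge> 0" unfolding kb1_def using Bpos alpos pos by simp
  have IY': "Yd t \<le> - (1/ru) * W t + (ka1 mp mm gp gm cp cm ru tu + kb1 mp mm gp gm cp cm ru tu * Sd t) * Y t"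
    if t: "t \<in> {0..T}" for t
    using IY[OF t] unfolding ka1_def kb1_def by (simp add: algebra_simps)
  have Sb': "\<bar>Sf t\<bar> \<le> kSm gp gm cp cm rl ru tl tu" if t: "t \<in> {0..T}" for t
    using Sb[OF t] unfolding kSm_def .
  have Y0': "Y 0 \<le> kY0 mp mm S0" using Y0b unfolding kY0_def S0 .
  have Ymax: "\<forall>t\<in>{0..T}. Y t \<le> kYm mp mm gp gm cp cm T rl ru tl tu S0"
    unfolding kYm_def
    by (rule gron[OF pos(7) w a1 b1 DY DS IY' Ynn Wnn Sb' Y0'])
  have c8: "\<forall>t\<in>{0..T}. integral {0..1} (\<lambda>x. (pdx u t x)\<^sup>2) \<le> kC8 mp mm gp gm cp cm T rl ru tl tu S0"
  proof
    fix t assume t: "t \<in> {0..T}"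
    have "2 * (mmax * Y t + Pk\<^sup>2) / mmin\<^sup>2 \<le> 2 * (mmax * kYm mp mm gp gm cp cm T rl ru tl tu S0 + Pk\<^sup>2) / mmin\<^sup>2"
      using Ymax t pos by (intro divide_right_mono mult_left_mono add_right_mono) auto
    then show "integral {0..1} (\<lambda>x. (pdx u t x)\<^sup>2) \<le> kC8 mp mm gp gm cp cm T rl ru tl tu S0"
      using C8b[OF t] unfolding kC8_def by linarith
  qed
  have e: "4 * alk / mmin\<^sup>2 \<ge> 0" "2 / mmin\<^sup>2 \<ge> 0" "(4 * bek + 2 * Pk\<^sup>2) / mmin\<^sup>2 \<ge> 0"
    using alpos bepos by auto
  have c9: "integral {0..T} (\<lambda>t. (SUP x\<in>{0..1}. \<bar>pdx u t x\<bar>)\<^sup>2)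
     \<le> (4 * alk / mmin\<^sup>2 + 2 / mmin\<^sup>2 * kb1 mp mm gp gm cp cm ru tu * kYm mp mm gp gm cp cm T rl ru tl tu S0 / (1/ru))
         * (2 * kSm gp gm cp cm rl ru tl tu)
       + (2 / mmin\<^sup>2 / (1/ru)) * kY0 mp mm S0
       + ((4 * bek + 2 * Pk\<^sup>2) / mmin\<^sup>2 + 2 / mmin\<^sup>2 * ka1 mp mm gp gm cp cm ru tu * kYm mp mm gp gm cp cm T rl ru tl tu S0 / (1/ru)) * T"
    by (rule gron2[OF pos(7) w a1 b1 e DY DS IY' Ynn Sdnn _ Sb' Y0' hSUPb])
       (use Ymax in auto)
  show ?thesis using c8 c9 unfolding kC9_def by linarith
qed

end

theorem mainTheorem5:
  fixes mp mm gp gm cp cm T rl ru tl tu S0 E0 :: real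
  assumes "mp > 0" "mm > 0" "gp > 1" "gm > 1" "cp > 0" "cm > 0"
    and "T > 0" and "rl > 0" "ru > 0" "tl > 0" "tu > 0"
  shows "\<exists>C8 C9. C8 > 0 \<and> C9 > 0 \<and>
    (\<forall>c \<rho> \<theta> u.
       NS_solution mp mm gp gm cp cm T c \<rho> \<theta> u \<and>
       (\<forall>t\<in>{0..T}. \<forall>x. 0 \<le> c t x \<and> c t x \<le> 1 \<and>
          rl \<le> \<rho> t x \<and> \<rho> t x \<le> ru \<and> tl \<le> \<theta> t x \<and> \<theta> t x \<le> tu) \<and>
       integral {0..1} (\<lambda>x. (stress mp mm gp gm c \<rho> \<theta> u 0 x)\<^sup>2) = S0 \<and>
       integral {0..1} (\<lambda>x. \<rho> 0 x * energy cp cm c \<theta> u 0 x) = E0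
     \<longrightarrow>
       (\<forall>t\<in>{0..T}. integral {0..1} (\<lambda>x. (pdx u t x)\<^sup>2) \<le> C8) \<and>
       integral {0..T} (\<lambda>t. (SUP x\<in>{0..1}. \<bar>pdx u t x\<bar>)\<^sup>2) \<le> C9)"
proof (intro exI conjI allI impI)
  show "kC8 mp mm gp gm cp cm T rl ru tl tu S0 > 0" "kC9 mp mm gp gm cp cm T rl ru tl tu S0 > 0"
    using kpos[OF assms] by auto
  fix c \<rho> \<theta> u :: "real \<Rightarrow> real \<Rightarrow> real"
  assume H: "NS_solution mp mm gp gm cp cm T c \<rho> \<theta> u \<and>
       (\<forall>t\<in>{0..T}. \<forall>x. 0 \<le> c t x \<and> c t x \<le> 1 \<and>
          rl \<le> \<rho> t x \<and> \<rho> t x \<le> ru \<and> tl \<le> \<theta> t x \<and> \<theta> t x \<le> tu) \<and>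
       integral {0..1} (\<lambda>x. (stress mp mm gp gm c \<rho> \<theta> u 0 x)\<^sup>2) = S0 \<and>
       integral {0..1} (\<lambda>x. \<rho> 0 x * energy cp cm c \<theta> u 0 x) = E0"
  then have NS: "NS_solution mp mm gp gm cp cm T c \<rho> \<theta> u" and B: "\<forall>t\<in>{0..T}. \<forall>x. 0 \<le> c t x \<and> c t x \<le> 1 \<and>
          rl \<le> \<rho> t x \<and> \<rho> t x \<le> ru \<and> tl \<le> \<theta> t x \<and> \<theta> t x \<le> tu"
    and S0: "integral {0..1} (\<lambda>x. (stress mp mm gp gm c \<rho> \<theta> u 0 x)\<^sup>2) = S0" by auto
  from NS obtain U where U: "open U" "{0..T} \<times> UNIV \<subseteq> U"
    "smooth_on2 U c" "smooth_on2 U \<rho>" "smooth_on2 U \<theta>" "smooth_on2 U u"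
    and per: "\<forall>t x. c t (x + 1) = c t x \<and> \<rho> t (x + 1) = \<rho> t x \<and>
           \<theta> t (x + 1) = \<theta> t x \<and> u t (x + 1) = u t x"
    and eq: "\<forall>t\<in>{0..T}. \<forall>x.
       pdt \<rho> t x + pdx (\<lambda>t x. \<rho> t x * u t x) t x = 0 \<and>
       pdt (\<lambda>t x. \<rho> t x * c t x) t x + pdx (\<lambda>t x. \<rho> t x * c t x * u t x) t x = 0 \<and>
       pdt (\<lambda>t x. \<rho> t x * u t x) t x + pdx (\<lambda>t x. \<rho> t x * (u t x)\<^sup>2) t x
          = pdx (stress mp mm gp gm c \<rho> \<theta> u) t x \<and>
       pdt (\<lambda>t x. \<rho> t x * energy cp cm c \<theta> u t x) t x
         + pdx (\<lambda>t x. \<rho> t x * energy cp cm c \<theta> u t x * u t x) t x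
         = pdx (\<lambda>t x. stress mp mm gp gm c \<rho> \<theta> u t x * u t x) t x"
    unfolding NS_solution_def Let_def by blast
  interpret N: nsl mp mm gp gm cp cm T rl ru tl tu c \<rho> \<theta> u U
    by (unfold_locales) (use assms U per eq B in auto)
  show "\<forall>t\<in>{0..T}. integral {0..1} (\<lambda>x. (pdx u t x)\<^sup>2) \<le> kC8 mp mm gp gm cp cm T rl ru tl tu S0"
    using N.final[OF S0] by blast
  show "integral {0..T} (\<lambda>t. (SUP x\<in>{0..1}. \<bar>pdx u t x\<bar>)\<^sup>2) \<le> kC9 mp mm gp gm cp cm T rl ru tl tu S0"
    using N.final[OF S0] by blast
qed


end
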